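(* Let $\Gamma$ be a tetravalent graph admitting a subgroup $G\le\mathrm{Aut}(\Gamma)$ acting regularly on the arcs of $\Gamma$. If $\Gamma$ is the underlying graph of a map $\mathcal M$ in class $2_{\{0,1\}}$ with $\mathrm{Aut}(\mathcal M)=G$, then all orbits of $G$-consistent cycles of $\Gamma$ are $G$-symmetric. Moreover, if $G=\mathrm{Aut}(\Gamma)$ and all orbits of $G$-consistent cycles of $\Gamma$ are $G$-symmetric, then for any two orbits of $G$-consistent cycles of $\Gamma$ there exists a map $\mathcal M$ in class $2_{\{0,1\}}$ with $\mathrm{Aut}(\mathcal M)=G$ and underlying graph $\Gamma$ whose face boundaries are exactly the members of these two orbits.
   Context: A map is a $2$-cell embedding of a connected simple graph (its underlying graph) in a closed surface; the components of the complement are the faces. All maps considered are polytopal: flags correspond bijectively to incident triples (vertex, edge, face). For a flag $\Phi$ and $i\in\{0,1,2\}$, $\Phi^i$ is the unique flag differing from $\Phi$ exactly in its vertex ($i=0$), edge ($i=1$) or face ($i=2$). $\mathrm{Aut}(\mathcal M)$ is the group of automorphisms of the underlying graph preserving the set of faces, acting on flags. A map is in class $2_{\{0,1\}}$ if $\mathrm{Aut}(\mathcal M)$ has exactly two orbits on flags and for every flag $\Phi$, the flags $\Phi^0,\Phi^1$ lie in the orbit of $\Phi$ while $\Phi^2$ does not. For an arc-transitive $G\le\mathrm{Aut}(\Gamma)$, a directed cycle $(v_0,\ldots,v_{r-1})$ is $G$-consistent if some $g\in G$ maps each $v_i$ to $v_{i+1}$ (indices mod $r$); an undirected cycle is $G$-consistent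 if both orientations are; it is $G$-symmetric if moreover some element of $G$ maps one orientation to the other. $G$ acts on the set of $G$-consistent cycles, giving orbits of $G$-consistent cycles. *)

theory Defs
  imports "HOL-Combinatorics.Permutations"
begin

definition simple_graph :: "'a set \<Rightarrow> ('a \<Rightarrow> 'a \<Rightarrow> bool) \<Rightarrow> bool" where
  "simple_graph V E \<longleftrightarrow> finite V \<and> (\<forall>u w. E u w \<longrightarrow> u \<in> V \<and> w \<in> V)
     \<and> (\<forall>u w. E u w \<longrightarrow> E w u) \<and> (\<forall>u. \<not> E u u)"

definition connected_graph :: "'a set \<Rightarrow> ('a \<Rightarrow> 'a \<Rightarrow> bool) \<Rightarrow> bool" where
  "connected_graph V E \<longleftrightarrow> V \<noteq> {} \<and> (\<forall>u\<in>V. \<forall>w\<in>V. (u, w) \<in> {(x, y). E x y}\<^sup>*)"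

definition tetravalent :: "'a set \<Rightarrow> ('a \<Rightarrow> 'a \<Rightarrow> bool) \<Rightarrow> bool" where
  "tetravalent V E \<longleftrightarrow> (\<forall>v\<in>V. card {w\<in>V. E v w} = 4)"

definition is_edge :: "('a \<Rightarrow> 'a \<Rightarrow> bool) \<Rightarrow> 'a set \<Rightarrow> bool" where
  "is_edge E e \<longleftrightarrow> (\<exists>u w. E u w \<and> e = {u, w})"

definition arcs :: "('a \<Rightarrow> 'a \<Rightarrow> bool) \<Rightarrow> ('a \<times> 'a) set" where
  "arcs E = {(u, w). E u w}"

definition graph_aut :: "'a set \<Rightarrow> ('a \<Rightarrow> 'a \<Rightarrow> bool) \<Rightarrow> ('a \<Rightarrow> 'a) set" where
  "graph_aut V E = {g. g permutes V \<and> (\<forall>x\<in>V. \<forall>y\<in>V. E x y \<longleftrightarrow> E (g x) (g y))}"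

definition perm_subgroup :: "'a set \<Rightarrow> ('a \<Rightarrow> 'a \<Rightarrow> bool) \<Rightarrow> ('a \<Rightarrow> 'a) set \<Rightarrow> bool" where
  "perm_subgroup V E G \<longleftrightarrow> G \<subseteq> graph_aut V E \<and> id \<in> G
     \<and> (\<forall>g\<in>G. \<forall>h\<in>G. g \<circ> h \<in> G) \<and> (\<forall>g\<in>G. inv g \<in> G)"

definition arc_regular :: "('a \<Rightarrow> 'a \<Rightarrow> bool) \<Rightarrow> ('a \<Rightarrow> 'a) set \<Rightarrow> bool" where
  "arc_regular E G \<longleftrightarrow>
     (\<forall>a\<in>arcs E. \<forall>b\<in>arcs E. \<exists>!g. g \<in> G \<and> (g (fst a), g (snd a)) = b)"

definition is_cycle_list :: "('a \<Rightarrow> 'a \<Rightarrow> bool) \<Rightarrow> 'a list \<Rightarrow> bool" where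
  "is_cycle_list E vs \<longleftrightarrow> length vs \<ge> 3 \<and> distinct vs
     \<and> (\<forall>i<length vs. E (vs ! i) (vs ! (Suc i mod length vs)))"

definition dcycle_of :: "'a list \<Rightarrow> ('a \<times> 'a) set" where
  "dcycle_of vs = {(vs ! i, vs ! (Suc i mod length vs)) | i. i < length vs}"

definition dcycle :: "('a \<Rightarrow> 'a \<Rightarrow> bool) \<Rightarrow> ('a \<times> 'a) set \<Rightarrow> bool" where
  "dcycle E D \<longleftrightarrow> (\<exists>vs. is_cycle_list E vs \<and> D = dcycle_of vs)"

definition ucycle_of :: "('a \<times> 'a) set \<Rightarrow> 'a set set" where
  "ucycle_of D = {{u, w} | u w. (u, w) \<in> D}"

definition ucycle :: "('a \<Rightarrow> 'a \<Rightarrow> bool) \<Rightarrow> 'a set set \<Rightarrow> bool" where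
  "ucycle E C \<longleftrightarrow> (\<exists>D. dcycle E D \<and> C = ucycle_of D)"

definition orientation :: "('a \<Rightarrow> 'a \<Rightarrow> bool) \<Rightarrow> ('a \<times> 'a) set \<Rightarrow> 'a set set \<Rightarrow> bool" where
  "orientation E D C \<longleftrightarrow> dcycle E D \<and> ucycle_of D = C"

definition consistent_dcycle :: "('a \<Rightarrow> 'a) set \<Rightarrow> ('a \<times> 'a) set \<Rightarrow> bool" where
  "consistent_dcycle G D \<longleftrightarrow> (\<exists>g\<in>G. \<forall>(u, w)\<in>D. g u = w)"

definition consistent_cycle :: "('a \<Rightarrow> 'a \<Rightarrow> bool) \<Rightarrow> ('a \<Rightarrow> 'a) set \<Rightarrow> 'a set set \<Rightarrow> bool" where
  "consistent_cycle E G C \<longleftrightarrow> ucycle E C \<and> (\<forall>D. orientation E D C \<longrightarrow> consistent_dcycle G D)"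

definition arc_img :: "('a \<Rightarrow> 'a) \<Rightarrow> ('a \<times> 'a) set \<Rightarrow> ('a \<times> 'a) set" where
  "arc_img g D = (\<lambda>(u, w). (g u, g w)) ` D"

definition symmetric_cycle :: "('a \<Rightarrow> 'a \<Rightarrow> bool) \<Rightarrow> ('a \<Rightarrow> 'a) set \<Rightarrow> 'a set set \<Rightarrow> bool" where
  "symmetric_cycle E G C \<longleftrightarrow> consistent_cycle E G C
     \<and> (\<exists>g\<in>G. \<exists>D. orientation E D C \<and> arc_img g D = D\<inverse>)"

definition cyc_img :: "('a \<Rightarrow> 'a) \<Rightarrow> 'a set set \<Rightarrow> 'a set set" where
  "cyc_img g C = (\<lambda>e. g ` e) ` C"

definition cyc_orbit :: "('a \<Rightarrow> 'a) set \<Rightarrow> 'a set set \<Rightarrow> 'a set set set" where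
  "cyc_orbit G C = {cyc_img g C | g. g \<in> G}"

definition cc_orbits :: "('a \<Rightarrow> 'a \<Rightarrow> bool) \<Rightarrow> ('a \<Rightarrow> 'a) set \<Rightarrow> 'a set set set set" where
  "cc_orbits E G = {cyc_orbit G C | C. consistent_cycle E G C}"

definition symmetric_orbit :: "('a \<Rightarrow> 'a \<Rightarrow> bool) \<Rightarrow> ('a \<Rightarrow> 'a) set \<Rightarrow> 'a set set set \<Rightarrow> bool" where
  "symmetric_orbit E G Orb \<longleftrightarrow> (\<forall>C\<in>Orb. symmetric_cycle E G C)"

text \<open>A polytopal map with underlying graph (V,E) is given by its set F of faces,
  each face identified with its boundary, which is a cycle of the graph (edge set);
  every edge lies on exactly two faces, and at every vertex the faces around it
  link all incident edges into one cycle (so the surface is a closed surface).\<close>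
definition polytopal_map :: "'a set \<Rightarrow> ('a \<Rightarrow> 'a \<Rightarrow> bool) \<Rightarrow> 'a set set set \<Rightarrow> bool" where
  "polytopal_map V E F \<longleftrightarrow> simple_graph V E \<and> connected_graph V E
     \<and> (\<forall>f\<in>F. ucycle E f)
     \<and> (\<forall>e. is_edge E e \<longrightarrow> card {f\<in>F. e \<in> f} = 2)
     \<and> (\<forall>v\<in>V. \<forall>e e'. is_edge E e \<and> v \<in> e \<and> is_edge E e' \<and> v \<in> e' \<longrightarrow>
          (e, e') \<in> {(x, y). is_edge E x \<and> v \<in> x \<and> is_edge E y \<and> v \<in> y
                       \<and> (\<exists>f\<in>F. x \<in> f \<and> y \<in> f)}\<^sup>*)"

definition flags :: "'a set \<Rightarrow> ('a \<Rightarrow> 'a \<Rightarrow> bool) \<Rightarrow> 'a set set set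
                     \<Rightarrow> ('a \<times> 'a set \<times> 'a set set) set" where
  "flags V E F = {(v, e, f). v \<in> V \<and> is_edge E e \<and> f \<in> F \<and> v \<in> e \<and> e \<in> f}"

definition map_aut :: "'a set \<Rightarrow> ('a \<Rightarrow> 'a \<Rightarrow> bool) \<Rightarrow> 'a set set set \<Rightarrow> ('a \<Rightarrow> 'a) set" where
  "map_aut V E F = {g \<in> graph_aut V E. cyc_img g ` F = F}"

definition flag_act :: "('a \<Rightarrow> 'a) \<Rightarrow> ('a \<times> 'a set \<times> 'a set set) \<Rightarrow> ('a \<times> 'a set \<times> 'a set set)" where
  "flag_act g \<Phi> = (case \<Phi> of (v, e, f) \<Rightarrow> (g v, g ` e, cyc_img g f))"

definition flag_orbit :: "('a \<Rightarrow> 'a) set \<Rightarrow> ('a \<times> 'a set \<times> 'a set set)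
                          \<Rightarrow> ('a \<times> 'a set \<times> 'a set set) set" where
  "flag_orbit A \<Phi> = {flag_act g \<Phi> | g. g \<in> A}"

definition flag_adj :: "nat \<Rightarrow> ('a \<times> 'a set \<times> 'a set set) \<Rightarrow> ('a \<times> 'a set \<times> 'a set set) \<Rightarrow> bool" where
  "flag_adj i \<Phi> \<Psi> = (case \<Phi> of (v, e, f) \<Rightarrow> case \<Psi> of (v', e', f') \<Rightarrow>
      (i = 0 \<and> v \<noteq> v' \<and> e = e' \<and> f = f') \<or>
      (i = 1 \<and> v = v' \<and> e \<noteq> e' \<and> f = f') \<or>
      (i = 2 \<and> v = v' \<and> e = e' \<and> f \<noteq> f'))"

definition class_2_01 :: "'a set \<Rightarrow> ('a \<Rightarrow> 'a \<Rightarrow> bool) \<Rightarrow> 'a set set set \<Rightarrow> bool" where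
  "class_2_01 V E F \<longleftrightarrow>
     card {flag_orbit (map_aut V E F) \<Phi> | \<Phi>. \<Phi> \<in> flags V E F} = 2
     \<and> (\<forall>\<Phi>\<in>flags V E F. \<forall>\<Psi>\<in>flags V E F.
          (flag_adj 0 \<Phi> \<Psi> \<longrightarrow> \<Psi> \<in> flag_orbit (map_aut V E F) \<Phi>)
        \<and> (flag_adj 1 \<Phi> \<Psi> \<longrightarrow> \<Psi> \<in> flag_orbit (map_aut V E F) \<Phi>)
        \<and> (flag_adj 2 \<Phi> \<Psi> \<longrightarrow> \<Psi> \<notin> flag_orbit (map_aut V E F) \<Phi>))"

end

theory Submission
  imports Defs
begin


lemma suc_mod: "i < n \<Longrightarrow> Suc i mod n = (if Suc i = n then 0 else Suc i)"
  by auto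

lemma dcycle_of_mem: "(x,y) \<in> dcycle_of vs \<longleftrightarrow> (\<exists>i<length vs. x = vs!i \<and> y = vs!(Suc i mod length vs))"
  unfolding dcycle_of_def by auto

lemma cyc_func:
  assumes "distinct vs" "(x,y) \<in> dcycle_of vs" "(x,y') \<in> dcycle_of vs" shows "y = y'"
  using assms by (auto simp: dcycle_of_mem nth_eq_iff_index_eq)

lemma cyc_inj:
  assumes "distinct vs" "(x,y) \<in> dcycle_of vs" "(x',y) \<in> dcycle_of vs" shows "x = x'"
proof -
  from assms obtain i j where i: "i < length vs" "x = vs!i" "y = vs!(Suc i mod length vs)"
    and j: "j < length vs" "x' = vs!j" "y = vs!(Suc j mod length vs)" by (auto simp: dcycle_of_mem)
  have L: "length vs > 0" using i by auto
  have "Suc i mod length vs = Suc j mod length vs" using i j assms(1) L by (simp add: nth_eq_iff_index_eq)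
  hence "i = j" using i(1) j(1) by (simp add: suc_mod split: if_splits)
  thus ?thesis using i j by simp
qed

lemma cyc_no2:
  assumes "length vs \<ge> 3" "distinct vs" "(x,y) \<in> dcycle_of vs" "(y,x) \<in> dcycle_of vs" shows False
proof -
  from assms obtain i j where i: "i < length vs" "x = vs!i" "y = vs!(Suc i mod length vs)"
    and j: "j < length vs" "y = vs!j" "x = vs!(Suc j mod length vs)" by (auto simp: dcycle_of_mem)
  have L: "length vs > 0" using i by auto
  have "j = Suc i mod length vs" using i j assms(2) L by (simp add: nth_eq_iff_index_eq)
  moreover have "i = Suc j mod length vs" using i j assms(2) L by (simp add: nth_eq_iff_index_eq)
  ultimately show False using i(1) j(1) assms(1) by (simp add: suc_mod split: if_splits)
qed

lemma cyc_pred: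
  assumes "(x,y) \<in> dcycle_of vs" shows "\<exists>p. (p,x) \<in> dcycle_of vs"
proof -
  from assms obtain i where i: "i < length vs" "x = vs!i" by (auto simp: dcycle_of_mem)
  define k where "k = (if i = 0 then length vs - 1 else i - 1)"
  have "k < length vs" "Suc k mod length vs = i" using i unfolding k_def by (auto simp: suc_mod)
  thus ?thesis using i unfolding dcycle_of_mem by metis
qed

lemma cyc_succ:
  assumes "(p,x) \<in> dcycle_of vs" shows "\<exists>y. (x,y) \<in> dcycle_of vs"
proof -
  from assms obtain i where i: "i < length vs" "x = vs!(Suc i mod length vs)" by (auto simp: dcycle_of_mem)
  have L: "length vs > 0" using i by auto
  have "Suc i mod length vs < length vs" using L by simp
  thus ?thesis using i unfolding dcycle_of_mem by metis
qed

lemma dcycle_rev: "dcycle_of (rev vs) = (dcycle_of vs)\<inverse>"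
proof (cases "vs = []")
  case True thus ?thesis by (simp add: dcycle_of_def)
next
  case False
  define n where "n = length vs"
  have n: "n > 0" using False n_def by auto
  show ?thesis
  proof (rule set_eqI, clarify)
    fix a b
    show "(a,b) \<in> dcycle_of (rev vs) \<longleftrightarrow> (a,b) \<in> (dcycle_of vs)\<inverse>"
    proof
      assume "(a,b) \<in> dcycle_of (rev vs)"
      then obtain k where k: "k < n" "a = rev vs ! k" "b = rev vs ! (Suc k mod n)"
        by (auto simp: dcycle_of_mem n_def)
      show "(a,b) \<in> (dcycle_of vs)\<inverse>"
      proof (cases "Suc k < n")
        case True
        have e1: "Suc k mod n = Suc k" "n - Suc (Suc k) = n-2-k" "Suc (n-2-k) mod n = n - Suc k" using True by auto
        have "b = vs!(n-2-k)" "a = vs!(Suc (n-2-k) mod n)" using k True e1 by (auto simp: rev_nth n_def)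
        moreover have "n-2-k < n" using n by auto
        ultimately show ?thesis unfolding converse_iff dcycle_of_mem n_def[symmetric] by blast
      next
        case False
        hence "k = n - 1" using k by auto
        hence "b = vs!(n-1)" "a = vs!(Suc (n-1) mod n)" using k n by (auto simp: rev_nth n_def)
        moreover have "n-1 < n" using n by auto
        ultimately show ?thesis unfolding converse_iff dcycle_of_mem n_def[symmetric] by blast
      qed
    next
      assume "(a,b) \<in> (dcycle_of vs)\<inverse>"
      then obtain i where i: "i < n" "b = vs ! i" "a = vs ! (Suc i mod n)"
        by (auto simp: dcycle_of_mem n_def)
      show "(a,b) \<in> dcycle_of (rev vs)"
      proof (cases "Suc i < n")
        case True
        have e1: "Suc i mod n = Suc i" "n - Suc (n-2-i) = Suc i" "Suc (n-2-i) mod n = n - Suc i"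
          "n - Suc (n - Suc i) = i" using True by auto
        have "a = rev vs!(n-2-i)" "b = rev vs!(Suc (n-2-i) mod n)" using i True e1
          by (auto simp: rev_nth n_def)
        moreover have "n-2-i < n" using n by auto
        ultimately show ?thesis unfolding dcycle_of_mem n_def[symmetric] by (auto simp: n_def)
      next
        case False
        hence "i = n - 1" using i by auto
        hence "a = rev vs!(n-1)" "b = rev vs!(Suc (n-1) mod n)" using i n by (auto simp: rev_nth n_def)
        moreover have "n-1 < n" using n by auto
        ultimately show ?thesis unfolding dcycle_of_mem n_def[symmetric] by (auto simp: n_def)
      qed
    qed
  qed
qed

definition orb :: "('a \<Rightarrow> 'a) \<Rightarrow> 'a \<Rightarrow> 'a set" where
  "orb r x = {(r ^^ m) x | m. True}"

definition verts :: "('a \<times> 'a) set \<Rightarrow> 'a set" where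
  "verts D = fst ` D"

lemma verts_dcycle_of: "verts (dcycle_of vs) = set vs"
proof -
  have "verts (dcycle_of vs) \<subseteq> set vs" unfolding verts_def dcycle_of_def by auto
  moreover have "set vs \<subseteq> verts (dcycle_of vs)"
  proof
    fix x assume "x \<in> set vs"
    then obtain i where "i < length vs" "x = vs!i" by (auto simp: in_set_conv_nth)
    thus "x \<in> verts (dcycle_of vs)" unfolding verts_def dcycle_of_def by force
  qed
  ultimately show ?thesis by blast
qed

lemma orb_step:
  assumes "\<forall>(x,y)\<in>dcycle_of vs. r x = y" "i < length vs"
  shows "vs!(Suc i mod length vs) = r (vs!i)"
proof -
  have "(vs!i, vs!(Suc i mod length vs)) \<in> dcycle_of vs" using assms(2) unfolding dcycle_of_mem by blast
  thus ?thesis using assms(1) by auto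
qed

lemma orb_pow:
  assumes "\<forall>(x,y)\<in>dcycle_of vs. r x = y" "i < length vs"
  shows "vs!((i+m) mod length vs) = (r^^m) (vs!i)"
proof (induction m)
  case 0 thus ?case using assms by simp
next
  case (Suc m)
  have L: "length vs > 0" using assms by auto
  have "(i + Suc m) mod length vs = Suc ((i+m) mod length vs) mod length vs"
    by (simp add: mod_Suc_eq)
  also have "vs ! \<dots> = r (vs!((i+m) mod length vs))" using orb_step[OF assms(1)] L by simp
  finally show ?case using Suc by simp
qed

lemma orb_set:
  assumes "\<forall>(x,y)\<in>dcycle_of vs. r x = y" "x \<in> set vs"
  shows "set vs = orb r x"
proof -
  obtain i where i: "i < length vs" "x = vs!i" using assms(2) by (auto simp: in_set_conv_nth)
  have L: "length vs > 0" using i by auto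
  show ?thesis
  proof
    show "set vs \<subseteq> orb r x"
    proof
      fix y assume "y \<in> set vs"
      then obtain j where j: "j < length vs" "y = vs!j" by (auto simp: in_set_conv_nth)
      have e: "(i + (j + length vs - i)) mod length vs = j" using i(1) j(1) by simp
      have "vs!((i + (j + length vs - i)) mod length vs) = (r^^(j + length vs - i)) (vs!i)"
        by (rule orb_pow[OF assms(1) i(1)])
      hence "y = (r^^(j + length vs - i)) x" by (simp only: e j(2) i(2))
      thus "y \<in> orb r x" unfolding orb_def by blast
    qed
  next
    show "orb r x \<subseteq> set vs"
    proof
      fix y assume "y \<in> orb r x"
      then obtain m where m: "y = (r^^m) x" unfolding orb_def by blast
      have "vs!((i + m) mod length vs) = (r^^m) (vs!i)" by (rule orb_pow[OF assms(1) i(1)])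
      moreover have "(i + m) mod length vs < length vs" using L by simp
      ultimately show "y \<in> set vs" using m i(2) by (metis nth_mem)
    qed
  qed
qed

lemma dcycle_char:
  assumes "\<forall>(x,y)\<in>dcycle_of vs. r x = y"
  shows "dcycle_of vs = {(x, r x) | x. x \<in> set vs}"
proof (rule set_eqI, clarify)
  fix a b
  show "(a,b) \<in> dcycle_of vs \<longleftrightarrow> (a,b) \<in> {(x, r x) | x. x \<in> set vs}"
  proof
    assume h: "(a,b) \<in> dcycle_of vs"
    hence "a \<in> set vs" unfolding dcycle_of_mem by auto
    moreover have "b = r a" using h assms by auto
    ultimately show "(a,b) \<in> {(x, r x) | x. x \<in> set vs}" by blast
  next
    assume "(a,b) \<in> {(x, r x) | x. x \<in> set vs}"
    hence h: "a \<in> set vs" "b = r a" by auto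
    then obtain i where i: "i < length vs" "a = vs!i" by (auto simp: in_set_conv_nth)
    have "(vs!i, vs!(Suc i mod length vs)) \<in> dcycle_of vs" using i(1) unfolding dcycle_of_mem by blast
    moreover have "vs!(Suc i mod length vs) = r (vs!i)" by (rule orb_step[OF assms i(1)])
    ultimately show "(a,b) \<in> dcycle_of vs" using h i by simp
  qed
qed

lemma is_cycle_list_alt:
  "is_cycle_list E vs \<longleftrightarrow> length vs \<ge> 3 \<and> distinct vs \<and> (\<forall>(x,y)\<in>dcycle_of vs. E x y)"
  unfolding is_cycle_list_def dcycle_of_def by auto

lemma ucyc_mem: "{v,p} \<in> ucycle_of D \<longleftrightarrow> (v,p) \<in> D \<or> (p,v) \<in> D"
  unfolding ucycle_of_def by (auto simp: doubleton_eq_iff)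

lemma ucyc_mem2: "e \<in> ucycle_of D \<longleftrightarrow> (\<exists>u w. (u,w) \<in> D \<and> e = {u,w})"
  unfolding ucycle_of_def by auto

lemma at_most_two:
  assumes "distinct vs" "{v,p} \<in> ucycle_of (dcycle_of vs)" "{v,q} \<in> ucycle_of (dcycle_of vs)"
    "{v,s} \<in> ucycle_of (dcycle_of vs)"
  shows "p = q \<or> p = s \<or> q = s"
proof -
  let ?D = "dcycle_of vs"
  have F: "\<And>y y'. (v,y) \<in> ?D \<Longrightarrow> (v,y') \<in> ?D \<Longrightarrow> y = y'" using cyc_func[OF assms(1)] by blast
  have I: "\<And>y y'. (y,v) \<in> ?D \<Longrightarrow> (y',v) \<in> ?D \<Longrightarrow> y = y'" using cyc_inj[OF assms(1)] by blast
  have "(v,p) \<in> ?D \<or> (p,v) \<in> ?D" "(v,q) \<in> ?D \<or> (q,v) \<in> ?D" "(v,s) \<in> ?D \<or> (s,v) \<in> ?D"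
    using assms(2-4) unfolding ucyc_mem by auto
  show ?thesis
  proof (rule ccontr)
    assume "\<not> ?thesis"
    thus False using F I \<open>(v,p) \<in> ?D \<or> (p,v) \<in> ?D\<close> \<open>(v,q) \<in> ?D \<or> (q,v) \<in> ?D\<close> \<open>(v,s) \<in> ?D \<or> (s,v) \<in> ?D\<close> by metis
  qed
qed

lemma other_edge:
  assumes "length vs \<ge> 3" "distinct vs" "{v,a} \<in> ucycle_of (dcycle_of vs)"
  shows "\<exists>b. b \<noteq> a \<and> {v,b} \<in> ucycle_of (dcycle_of vs)"
proof -
  have "(v,a) \<in> dcycle_of vs \<or> (a,v) \<in> dcycle_of vs" using assms(3) unfolding ucyc_mem .
  thus ?thesis
proof (elim disjE)
  assume h: "(v,a) \<in> dcycle_of vs"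
  then obtain p where p: "(p,v) \<in> dcycle_of vs" using cyc_pred by metis
  have "p \<noteq> a" using cyc_no2[OF assms(1,2) h] p by auto
  thus ?thesis using p unfolding ucyc_mem by blast
next
  assume h: "(a,v) \<in> dcycle_of vs"
  then obtain p where p: "(v,p) \<in> dcycle_of vs" using cyc_succ by metis
  have "p \<noteq> a" using cyc_no2[OF assms(1,2) h] p by auto
  thus ?thesis using p unfolding ucyc_mem by blast
qed
qed




lemma arc_img_mem: "(a,b) \<in> arc_img g D \<longleftrightarrow> (\<exists>x y. (x,y) \<in> D \<and> a = g x \<and> b = g y)"
  unfolding arc_img_def by auto

lemma arc_img_comp: "arc_img (g \<circ> h) D = arc_img g (arc_img h D)"
  unfolding arc_img_def by force

lemma arc_img_id: "arc_img id D = D"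
  unfolding arc_img_def by auto

lemma arc_img_conv: "arc_img g (D\<inverse>) = (arc_img g D)\<inverse>"
  unfolding arc_img_def by force

lemma ucyc_conv: "ucycle_of (D\<inverse>) = ucycle_of D"
proof -
  have c: "\<And>u w. {u,w} = {w,u}" by (rule insert_commute)
  show ?thesis unfolding ucycle_of_def using c by blast
qed

lemma ucyc_img: "ucycle_of (arc_img g D) = cyc_img g (ucycle_of D)"
proof (rule set_eqI)
  fix e
  show "e \<in> ucycle_of (arc_img g D) \<longleftrightarrow> e \<in> cyc_img g (ucycle_of D)"
  proof
    assume "e \<in> ucycle_of (arc_img g D)"
    then obtain u w where "(u,w) \<in> arc_img g D" "e = {u,w}" unfolding ucyc_mem2 by blast
    then obtain x y where "(x,y) \<in> D" "e = {g x, g y}" unfolding arc_img_mem by blast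
    moreover have "{g x, g y} = g ` {x,y}" by simp
    moreover have "{x,y} \<in> ucycle_of D" using \<open>(x,y) \<in> D\<close> unfolding ucyc_mem by simp
    ultimately show "e \<in> cyc_img g (ucycle_of D)" unfolding cyc_img_def by (metis image_eqI)
  next
    assume "e \<in> cyc_img g (ucycle_of D)"
    then obtain e' where "e' \<in> ucycle_of D" "e = g ` e'" unfolding cyc_img_def by blast
    then obtain x y where "(x,y) \<in> D" "e = {g x, g y}" unfolding ucyc_mem2 by (metis image_insert image_empty)
    moreover have "(g x, g y) \<in> arc_img g D" using \<open>(x,y) \<in> D\<close> unfolding arc_img_mem by blast
    ultimately show "e \<in> ucycle_of (arc_img g D)" unfolding ucyc_mem2 by blast
  qed
qed

lemma cyc_img_comp: "cyc_img (g \<circ> h) C = cyc_img g (cyc_img h C)"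
  unfolding cyc_img_def by (simp add: image_image image_comp)

lemma cyc_img_id: "cyc_img id C = C"
  unfolding cyc_img_def by auto

lemma dcycle_of_map: "dcycle_of (map g vs) = arc_img g (dcycle_of vs)"
proof (rule set_eqI, clarify)
  fix a b
  show "(a,b) \<in> dcycle_of (map g vs) \<longleftrightarrow> (a,b) \<in> arc_img g (dcycle_of vs)"
  proof
    assume "(a,b) \<in> dcycle_of (map g vs)"
    then obtain i where i0: "i < length vs" "a = map g vs!i" "b = map g vs!(Suc i mod length vs)"
      unfolding dcycle_of_mem by auto
    have L: "0 < length vs" using i0 by auto
    have "Suc i mod length vs < length vs" using L by simp
    hence i: "i < length vs" "a = g (vs!i)" "b = g (vs!(Suc i mod length vs))" using i0 by auto
    hence "(vs!i, vs!(Suc i mod length vs)) \<in> dcycle_of vs" unfolding dcycle_of_mem by blast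
    thus "(a,b) \<in> arc_img g (dcycle_of vs)" unfolding arc_img_mem using i by blast
  next
    assume "(a,b) \<in> arc_img g (dcycle_of vs)"
    then obtain i where i: "i < length vs" "a = g (vs!i)" "b = g (vs!(Suc i mod length vs))"
      unfolding dcycle_of_mem arc_img_mem by blast
    have L: "0 < length vs" using i by auto
    have "Suc i mod length vs < length vs" using L by simp
    hence "a = map g vs ! i" "b = map g vs ! (Suc i mod length (map g vs))" using i by auto
    thus "(a,b) \<in> dcycle_of (map g vs)" unfolding dcycle_of_mem using i by auto
  qed
qed

locale setting =
  fixes V :: "'a set" and E :: "'a \<Rightarrow> 'a \<Rightarrow> bool" and G :: "('a \<Rightarrow> 'a) set"
  assumes sg: "simple_graph V E" and ps: "perm_subgroup V E G" and ar: "arc_regular E G"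
begin

lemma E_sym: "E x y \<Longrightarrow> E y x" using sg unfolding simple_graph_def by blast
lemma E_V: "E x y \<Longrightarrow> x \<in> V \<and> y \<in> V" using sg unfolding simple_graph_def by blast
lemma E_irr: "E x y \<Longrightarrow> x \<noteq> y" using sg unfolding simple_graph_def by blast
lemma finV: "finite V" using sg unfolding simple_graph_def by blast

lemma G_perm: "g \<in> G \<Longrightarrow> g permutes V" using ps unfolding perm_subgroup_def graph_aut_def by blast
lemma G_E: "g \<in> G \<Longrightarrow> E x y \<Longrightarrow> E (g x) (g y)"
  using ps E_V unfolding perm_subgroup_def graph_aut_def by blast
lemma G_id: "id \<in> G" using ps unfolding perm_subgroup_def by blast
lemma G_comp: "g \<in> G \<Longrightarrow> h \<in> G \<Longrightarrow> g \<circ> h \<in> G" using ps unfolding perm_subgroup_def by blast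
lemma G_inv: "g \<in> G \<Longrightarrow> inv g \<in> G" using ps unfolding perm_subgroup_def by blast
lemma G_pow: "g \<in> G \<Longrightarrow> g ^^ n \<in> G"
  by (induction n) (auto simp: G_id G_comp)
lemma G_invl: "g \<in> G \<Longrightarrow> inv g (g x) = x" using G_perm permutes_inverses by fastforce
lemma G_invr: "g \<in> G \<Longrightarrow> g (inv g x) = x" using G_perm permutes_inverses by fastforce
lemma G_inj: "g \<in> G \<Longrightarrow> g x = g y \<Longrightarrow> x = y" using G_invl by metis
lemma G_invo: "g \<in> G \<Longrightarrow> g \<circ> inv g = id" using G_invr by auto
lemma G_invo2: "g \<in> G \<Longrightarrow> inv g \<circ> g = id" using G_invl by auto

lemma arc_uniq:
  assumes "g \<in> G" "h \<in> G" "E u w" "g u = h u" "g w = h w" shows "g = h"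
proof -
  have a: "(u,w) \<in> arcs E" "(g u, g w) \<in> arcs E" using assms G_E unfolding arcs_def by auto
  have X: "\<forall>a\<in>arcs E. \<forall>b\<in>arcs E. \<exists>!f. f \<in> G \<and> (f (fst a), f (snd a)) = b"
    using ar unfolding arc_regular_def .
  have "\<exists>!f. f \<in> G \<and> (f (fst (u,w)), f (snd (u,w))) = (g u, g w)" using X a by blast
  hence "\<exists>!f. f \<in> G \<and> (f u, f w) = (g u, g w)" by simp
  then obtain f where f: "\<And>y. y \<in> G \<and> (y u, y w) = (g u, g w) \<Longrightarrow> y = f" by (metis (no_types, lifting))
  have "g = f" using f[of g] assms(1) by simp
  moreover have "h = f" using f[of h] assms by simp
  ultimately show ?thesis by simp
qed

lemma arc_fix: "g \<in> G \<Longrightarrow> E u w \<Longrightarrow> g u = u \<Longrightarrow> g w = w \<Longrightarrow> g = id"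
  using arc_uniq[of g id u w] G_id by simp

lemma arc_tr: assumes "E u w" "E x y" shows "\<exists>g\<in>G. g u = x \<and> g w = y"
proof -
  have a: "(u,w) \<in> arcs E" "(x,y) \<in> arcs E" using assms unfolding arcs_def by auto
  have X: "\<forall>a\<in>arcs E. \<forall>b\<in>arcs E. \<exists>!f. f \<in> G \<and> (f (fst a), f (snd a)) = b"
    using ar unfolding arc_regular_def .
  have "\<exists>!f. f \<in> G \<and> (f (fst (u,w)), f (snd (u,w))) = (x,y)" using X a by blast
  thus ?thesis by auto
qed

lemma dc_obt: assumes "dcycle E D" obtains vs where "length vs \<ge> 3" "distinct vs" "D = dcycle_of vs"
  "\<forall>(x,y)\<in>dcycle_of vs. E x y"
  using assms unfolding dcycle_def is_cycle_list_alt by blast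

lemma dc_E: "dcycle E D \<Longrightarrow> (x,y) \<in> D \<Longrightarrow> E x y"
  by (erule dc_obt) blast

lemma dc_no2: "dcycle E D \<Longrightarrow> (x,y) \<in> D \<Longrightarrow> (y,x) \<in> D \<Longrightarrow> False"
proof (erule dc_obt)
  fix vs assume "length vs \<ge> 3" "distinct vs" "D = dcycle_of vs" "(x,y) \<in> D" "(y,x) \<in> D"
  thus False using cyc_no2[of vs x y] by simp
qed

lemma dc_func: "dcycle E D \<Longrightarrow> (x,y) \<in> D \<Longrightarrow> (x,y') \<in> D \<Longrightarrow> y = y'"
proof (erule dc_obt)
  fix vs assume "distinct vs" "D = dcycle_of vs" "(x,y) \<in> D" "(x,y') \<in> D"
  thus "y = y'" using cyc_func[of vs x y y'] by simp
qed

lemma dc_inj: "dcycle E D \<Longrightarrow> (x,y) \<in> D \<Longrightarrow> (x',y) \<in> D \<Longrightarrow> x = x'"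
proof (erule dc_obt)
  fix vs assume "distinct vs" "D = dcycle_of vs" "(x,y) \<in> D" "(x',y) \<in> D"
  thus "x = x'" using cyc_inj[of vs x y x'] by simp
qed

lemma dc_conv: "dcycle E D \<Longrightarrow> dcycle E (D\<inverse>)"
proof (erule dc_obt)
  fix vs assume vs: "length vs \<ge> 3" "distinct vs" "D = dcycle_of vs" "\<forall>(x,y)\<in>dcycle_of vs. E x y"
  have "\<forall>(x,y)\<in>dcycle_of (rev vs). E x y" unfolding dcycle_rev using vs(4) E_sym by auto
  hence "is_cycle_list E (rev vs)" using vs unfolding is_cycle_list_alt by simp
  moreover have "D\<inverse> = dcycle_of (rev vs)" using vs(3) by (simp add: dcycle_rev)
  ultimately show "dcycle E (D\<inverse>)" unfolding dcycle_def by blast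
qed

lemma dc_img: "g \<in> G \<Longrightarrow> dcycle E D \<Longrightarrow> dcycle E (arc_img g D)"
proof (erule dc_obt)
  fix vs assume g: "g \<in> G" and vs: "length vs \<ge> 3" "distinct vs" "D = dcycle_of vs" "\<forall>(x,y)\<in>dcycle_of vs. E x y"
  have inj: "inj g" using G_inj[OF g] by (meson injI)
  have "\<forall>(x,y)\<in>dcycle_of (map g vs). E x y"
  proof (clarify)
    fix a b assume "(a,b) \<in> dcycle_of (map g vs)"
    then obtain x y where "(x,y) \<in> dcycle_of vs" "a = g x" "b = g y" unfolding dcycle_of_map arc_img_mem by blast
    thus "E a b" using vs(4) G_E[OF g] by auto
  qed
  moreover have "distinct (map g vs)" using vs(2) inj by (simp add: distinct_map inj_on_def)
  ultimately have "is_cycle_list E (map g vs)" using vs unfolding is_cycle_list_alt by simp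
  moreover have "arc_img g D = dcycle_of (map g vs)" using vs(3) by (simp add: dcycle_of_map)
  ultimately show "dcycle E (arc_img g D)" unfolding dcycle_def by blast
qed

lemma dc_other_edge: "dcycle E D \<Longrightarrow> {v,a} \<in> ucycle_of D \<Longrightarrow> \<exists>b. b \<noteq> a \<and> {v,b} \<in> ucycle_of D"
proof (erule dc_obt)
  fix vs assume "length vs \<ge> 3" "distinct vs" "D = dcycle_of vs" "{v,a} \<in> ucycle_of D"
  thus "\<exists>b. b \<noteq> a \<and> {v,b} \<in> ucycle_of D" using other_edge[of vs v a] by simp
qed

lemma dc_two: "dcycle E D \<Longrightarrow> {v,p} \<in> ucycle_of D \<Longrightarrow> {v,q} \<in> ucycle_of D \<Longrightarrow> {v,s} \<in> ucycle_of D
   \<Longrightarrow> p = q \<or> p = s \<or> q = s"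
proof (erule dc_obt)
  fix vs assume "distinct vs" "D = dcycle_of vs" "{v,p} \<in> ucycle_of D" "{v,q} \<in> ucycle_of D" "{v,s} \<in> ucycle_of D"
  thus "p = q \<or> p = s \<or> q = s" using at_most_two[of vs v p q s] by simp
qed

lemma dc_char:
  assumes "dcycle E D" "\<forall>(x,y)\<in>D. r x = y"
  shows "u \<in> verts D \<Longrightarrow> verts D = orb r u"
proof -
  obtain vs where vs: "is_cycle_list E vs" "D = dcycle_of vs" using assms(1) unfolding dcycle_def by blast
  have c: "\<forall>(x,y)\<in>dcycle_of vs. r x = y" using assms(2) vs(2) by simp
  show "u \<in> verts D \<Longrightarrow> verts D = orb r u" using orb_set[OF c, of u] verts_dcycle_of[of vs] vs(2) by simp
qed

lemma dc_mem: assumes "\<forall>(x,y)\<in>D. r x = y" shows "(x,y) \<in> D \<longleftrightarrow> x \<in> verts D \<and> y = r x"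
proof
  assume h: "(x,y) \<in> D"
  hence "x \<in> verts D" unfolding verts_def by (metis fst_conv image_eqI)
  moreover have "y = r x" using h assms by auto
  ultimately show "x \<in> verts D \<and> y = r x" by simp
next
  assume h: "x \<in> verts D \<and> y = r x"
  then obtain z where z: "(x,z) \<in> D" unfolding verts_def by auto
  hence "z = r x" using assms by auto
  thus "(x,y) \<in> D" using z h by simp
qed

lemma dc_succ: "dcycle E D \<Longrightarrow> (p,x) \<in> D \<Longrightarrow> \<exists>y. (x,y) \<in> D"
proof (erule dc_obt)
  fix vs assume "D = dcycle_of vs" "(p,x) \<in> D"
  thus "\<exists>y. (x,y) \<in> D" using cyc_succ[of p x vs] by simp
qed

lemma dc_pred0: "dcycle E D \<Longrightarrow> (x,y) \<in> D \<Longrightarrow> \<exists>p. (p,x) \<in> D"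
proof (erule dc_obt)
  fix vs assume "D = dcycle_of vs" "(x,y) \<in> D"
  thus "\<exists>p. (p,x) \<in> D" using cyc_pred[of x y vs] by simp
qed

lemma dc_rclosed: "dcycle E D \<Longrightarrow> \<forall>(x,y)\<in>D. r x = y \<Longrightarrow> x \<in> verts D \<Longrightarrow> r x \<in> verts D"
proof -
  assume a: "dcycle E D" "\<forall>(x,y)\<in>D. r x = y" "x \<in> verts D"
  hence "(x, r x) \<in> D" using dc_mem[OF a(2)] by simp
  then obtain y where "(r x, y) \<in> D" using dc_succ[OF a(1)] by blast
  thus ?thesis unfolding verts_def by force
qed

lemma dc_pred: "dcycle E D \<Longrightarrow> \<forall>(x,y)\<in>D. r x = y \<Longrightarrow> x \<in> verts D \<Longrightarrow> \<exists>p\<in>verts D. r p = x"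
proof -
  assume a: "dcycle E D" "\<forall>(x,y)\<in>D. r x = y" "x \<in> verts D"
  hence "(x, r x) \<in> D" using dc_mem[OF a(2)] by simp
  then obtain p where p: "(p, x) \<in> D" using dc_pred0[OF a(1)] by blast
  hence "p \<in> verts D" "r p = x" using a(2) dc_mem[of D r p x] by auto
  thus ?thesis by blast
qed

lemma dc_invclosed: "r \<in> G \<Longrightarrow> dcycle E D \<Longrightarrow> \<forall>(x,y)\<in>D. r x = y \<Longrightarrow> x \<in> verts D \<Longrightarrow> inv r x \<in> verts D"
proof -
  assume a: "r \<in> G" "dcycle E D" "\<forall>(x,y)\<in>D. r x = y" "x \<in> verts D"
  then obtain p where "p \<in> verts D" "r p = x" using dc_pred[OF a(2,3,4)] by blast
  moreover have "inv r (r p) = p" using G_invl a(1) by blast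
  ultimately show ?thesis by simp
qed

lemma dc_rimg: "dcycle E D \<Longrightarrow> \<forall>(x,y)\<in>D. r x = y \<Longrightarrow> arc_img r D = D"
proof -
  assume a: "dcycle E D" "\<forall>(x,y)\<in>D. r x = y"
  show ?thesis
  proof (rule set_eqI, clarify)
    fix u w
    show "(u,w) \<in> arc_img r D \<longleftrightarrow> (u,w) \<in> D"
    proof
      assume "(u,w) \<in> arc_img r D"
      then obtain x y where xy: "(x,y) \<in> D" "u = r x" "w = r y" unfolding arc_img_mem by blast
      hence "x \<in> verts D" "y = r x" using dc_mem[OF a(2)] by auto
      hence "u \<in> verts D" "w = r u" using xy dc_rclosed[OF a] by auto
      thus "(u,w) \<in> D" using dc_mem[OF a(2)] by auto
    next
      assume "(u,w) \<in> D"
      hence u: "u \<in> verts D" "w = r u" using dc_mem[OF a(2)] by auto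
      then obtain p where p: "p \<in> verts D" "r p = u" using dc_pred a by blast
      hence "(p,u) \<in> D" using dc_mem[OF a(2)] by auto
      thus "(u,w) \<in> arc_img r D" unfolding arc_img_mem using p u by blast
    qed
  qed
qed

lemma dc_powimg: "dcycle E D \<Longrightarrow> \<forall>(x,y)\<in>D. r x = y \<Longrightarrow> arc_img (r^^n) D = D"
  by (induction n) (auto simp: arc_img_id arc_img_comp dc_rimg)

lemma cons_conv: "r \<in> G \<Longrightarrow> \<forall>(x,y)\<in>D. r x = y \<Longrightarrow> \<forall>(x,y)\<in>D\<inverse>. inv r x = y"
  using G_invl by auto

lemma CU:
  assumes "dcycle E D" "dcycle E D'" "\<forall>(x,y)\<in>D. r x = y" "\<forall>(x,y)\<in>D'. r x = y"
    "u \<in> verts D" "u \<in> verts D'"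
  shows "D = D'"
proof -
  have v: "verts D = verts D'" using dc_char[OF assms(1,3) assms(5)] dc_char[OF assms(2,4) assms(6)] by simp
  show ?thesis
  proof (rule set_eqI, clarify)
    fix x y show "(x,y) \<in> D \<longleftrightarrow> (x,y) \<in> D'" using dc_mem[OF assms(3)] dc_mem[OF assms(4)] v by simp
  qed
qed

lemma SAME:
  assumes "dcycle E D" "dcycle E D'" "r \<in> G" "r' \<in> G" "\<forall>(x,y)\<in>D. r x = y" "\<forall>(x,y)\<in>D'. r' x = y"
    "ucycle_of D = ucycle_of D'" "(u,w) \<in> D" "(u,w) \<in> D'"
  shows "D = D'"
proof -
  have w: "w \<in> verts D" "w \<in> verts D'" using assms(8,9) assms(1,2) unfolding dcycle_def verts_def
    using cyc_succ by (metis fst_conv image_eqI)+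
  have a1: "(w, r w) \<in> D" using w dc_mem[OF assms(5)] by simp
  have a2: "(w, r' w) \<in> D'" using w dc_mem[OF assms(6)] by simp
  have "{w, r' w} \<in> ucycle_of D'" using a2 unfolding ucyc_mem by simp
  hence "{w, r' w} \<in> ucycle_of D" using assms(7) by simp
  hence "(w, r' w) \<in> D \<or> (r' w, w) \<in> D" unfolding ucyc_mem .
  hence "r' w = r w"
  proof
    assume "(w, r' w) \<in> D" thus ?thesis using a1 dc_func assms(1) by blast
  next
    assume "(r' w, w) \<in> D"
    hence "r' w = u" using assms(8) dc_inj assms(1) by blast
    hence "(w,u) \<in> D'" using a2 by simp
    thus ?thesis using dc_no2 assms(2,9) by blast
  qed
  moreover have "r' u = r u" using assms(5,6,8,9) by auto
  ultimately have "r' = r" using arc_uniq assms(3,4) dc_E assms(1,8) by metis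
  moreover have "u \<in> verts D" "u \<in> verts D'" using assms(8,9) unfolding verts_def by force+
  ultimately show ?thesis using CU assms by blast
qed

lemma OU:
  assumes "dcycle E D" "dcycle E D0" "r \<in> G" "r0 \<in> G" "\<forall>(x,y)\<in>D. r x = y" "\<forall>(x,y)\<in>D0. r0 x = y"
    "ucycle_of D0 = ucycle_of D"
  shows "D0 = D \<or> D0 = D\<inverse>"
proof -
  obtain vs where vs: "is_cycle_list E vs" "D0 = dcycle_of vs" using assms(2) unfolding dcycle_def by blast
  have "0 < length vs" using vs(1) unfolding is_cycle_list_def by linarith
  hence "(vs!0, vs!(Suc 0 mod length vs)) \<in> dcycle_of vs" unfolding dcycle_of_mem by blast
  hence "(vs!0, vs!(Suc 0 mod length vs)) \<in> D0" using vs(2) by simp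
  then obtain x y where xy: "(x,y) \<in> D0" by blast
  hence "{x,y} \<in> ucycle_of D0" unfolding ucyc_mem by simp
  hence "{x,y} \<in> ucycle_of D" using assms(7) by simp
  hence "(x,y) \<in> D \<or> (y,x) \<in> D" unfolding ucyc_mem .
  thus ?thesis
  proof
    assume "(x,y) \<in> D" thus ?thesis using SAME[OF assms(2,1,4,3,6,5,7) xy] by blast
  next
    assume "(y,x) \<in> D"
    hence h: "(x,y) \<in> D\<inverse>" by simp
    have c: "\<forall>(x,y)\<in>D\<inverse>. inv r x = y" using cons_conv[OF assms(3,5)] .
    have u: "ucycle_of D0 = ucycle_of (D\<inverse>)" using assms(7) by (simp add: ucyc_conv)
    have "D0 = D\<inverse>" by (rule SAME[OF assms(2) dc_conv[OF assms(1)] assms(4) G_inv[OF assms(3)] assms(6) c u xy h])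
    thus ?thesis by simp
  qed
qed

end



context setting begin

lemma dc_ne: "dcycle E D \<Longrightarrow> \<exists>x y. (x,y) \<in> D"
proof (erule dc_obt)
  fix vs assume vs: "length vs \<ge> 3" "D = dcycle_of vs"
  have "0 < length vs" using vs by linarith
  hence "(vs!0, vs!(Suc 0 mod length vs)) \<in> dcycle_of vs" unfolding dcycle_of_mem by blast
  thus "\<exists>x y. (x,y) \<in> D" using vs(2) by blast
qed

lemma verts_mem: "(x,y) \<in> D \<Longrightarrow> x \<in> verts D"
  unfolding verts_def by (metis fst_conv image_eqI)

lemma swap_sym:
  assumes dc: "dcycle E D" and r: "r \<in> G" "\<forall>(x,y)\<in>D. r x = y"
    and a: "(a, v) \<in> D" "(v, d) \<in> D"
    and k: "k \<in> G" "k v = v" "k a = d" "k d = a"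
  shows "arc_img k D = D\<inverse>"
proof -
  have rv: "r a = v" "r v = d" using a r(2) by auto
  have Eva: "E v a" using dc_E[OF dc a(1)] E_sym by blast
  have Edv: "E d v" using dc_E[OF dc a(2)] E_sym by blast
  have kk: "k \<circ> k = id" using arc_uniq[OF G_comp[OF k(1) k(1)] G_id Eva] k by simp
  hence kkx: "\<And>x. k (k x) = x" by (metis comp_apply id_apply)
  have "k \<circ> r \<circ> k = inv r"
  proof (rule arc_uniq[OF G_comp[OF G_comp[OF k(1) r(1)] k(1)] G_inv[OF r(1)] Edv])
    show "(k \<circ> r \<circ> k) d = inv r d" using k rv G_invl[OF r(1), of v] by simp
    show "(k \<circ> r \<circ> k) v = inv r v" using k rv G_invl[OF r(1), of a] by simp
  qed
  hence kr: "\<And>x. k (r x) = inv r (k x)" using kkx by (metis comp_apply)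
  have va: "a \<in> verts D" using verts_mem[OF a(1)] .
  have dv: "d \<in> verts D" using dc_rclosed[OF dc r(2) verts_mem[OF a(2)]] rv by simp
  have kS: "\<And>x. x \<in> verts D \<Longrightarrow> k x \<in> verts D"
  proof -
    fix x assume "x \<in> verts D"
    hence "x \<in> orb r a" using dc_char[OF dc r(2) va] by simp
    then obtain m where m: "x = (r^^m) a" unfolding orb_def by blast
    have "k ((r^^m) a) \<in> verts D"
    proof (induction m)
      case 0 thus ?case using k dv by simp
    next
      case (Suc m)
      have "k ((r^^Suc m) a) = inv r (k ((r^^m) a))" using kr by simp
      thus ?case using dc_invclosed[OF r(1) dc r(2) Suc] by simp
    qed
    thus "k x \<in> verts D" using m by simp
  qed
  show ?thesis
  proof (rule set_eqI, clarify)
    fix x y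
    show "(x,y) \<in> arc_img k D \<longleftrightarrow> (x,y) \<in> D\<inverse>"
    proof
      assume "(x,y) \<in> arc_img k D"
      then obtain x' y' where h: "(x',y') \<in> D" "x = k x'" "y = k y'" unfolding arc_img_mem by blast
      hence x': "x' \<in> verts D" "y' = r x'" using dc_mem[OF r(2)] by auto
      hence "y = inv r x" using h kr by simp
      moreover have "x \<in> verts D" using kS x' h by simp
      ultimately have "inv r x \<in> verts D" "r y = x" using dc_invclosed[OF r(1) dc r(2)] G_invr[OF r(1)] by auto
      hence "(y,x) \<in> D" using dc_mem[OF r(2)] \<open>y = inv r x\<close> by simp
      thus "(x,y) \<in> D\<inverse>" by simp
    next
      assume "(x,y) \<in> D\<inverse>"
      hence "(y,x) \<in> D" by simp
      hence y: "y \<in> verts D" "x = r y" using dc_mem[OF r(2)] by auto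
      have xv: "x \<in> verts D" using dc_rclosed[OF dc r(2) y(1)] y(2) by simp
      define z where "z = k x"
      have zv: "z \<in> verts D" using kS[OF xv] z_def by simp
      hence "(z, r z) \<in> D" using dc_mem[OF r(2)] by simp
      moreover have "k z = x" using kkx z_def by simp
      moreover have "k (r z) = y" using kr[of z] \<open>k z = x\<close> y(2) G_invl[OF r(1)] by simp
      ultimately show "(x,y) \<in> arc_img k D" unfolding arc_img_mem by metis
    qed
  qed
qed

lemma sym_from_swaps:
  assumes SW: "\<And>v a d. E v a \<Longrightarrow> E v d \<Longrightarrow> a \<noteq> d \<Longrightarrow> \<exists>k\<in>G. k v = v \<and> k a = d \<and> k d = a"
    and cc: "consistent_cycle E G C"
  shows "symmetric_cycle E G C"
proof -
  obtain D where D: "dcycle E D" "C = ucycle_of D" using cc unfolding consistent_cycle_def ucycle_def by blast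
  have oD: "orientation E D C" unfolding orientation_def using D by simp
  then obtain r where r: "r \<in> G" "\<forall>(x,y)\<in>D. r x = y" using cc unfolding consistent_cycle_def consistent_dcycle_def by blast
  obtain a v where av: "(a,v) \<in> D" using dc_ne[OF D(1)] by blast
  obtain d where vd: "(v,d) \<in> D" using dc_succ[OF D(1) av] by blast
  have "E v a" using dc_E[OF D(1) av] E_sym by blast
  moreover have "E v d" using dc_E[OF D(1) vd] .
  moreover have "a \<noteq> d" using dc_no2[OF D(1) av] vd by blast
  ultimately obtain k where k: "k \<in> G" "k v = v" "k a = d" "k d = a" using SW by blast
  have "arc_img k D = D\<inverse>" by (rule swap_sym[OF D(1) r av vd k])
  thus ?thesis using cc oD k(1) unfolding symmetric_cycle_def by blast
qed

lemma consistent_img: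
  assumes g: "g \<in> G" and cc: "consistent_cycle E G C"
  shows "consistent_cycle E G (cyc_img g C)"
proof -
  obtain D where D: "dcycle E D" "C = ucycle_of D" using cc unfolding consistent_cycle_def ucycle_def by blast
  have "ucycle E (cyc_img g C)" unfolding ucycle_def
    using dc_img[OF g D(1)] ucyc_img[of g D] D(2) by metis
  moreover have "consistent_dcycle G D'" if o: "orientation E D' (cyc_img g C)" for D'
  proof -
    have d1: "dcycle E D'" "ucycle_of D' = cyc_img g C" using o unfolding orientation_def by auto
    define D'' where "D'' = arc_img (inv g) D'"
    have "dcycle E D''" unfolding D''_def using dc_img[OF G_inv[OF g] d1(1)] .
    moreover have "ucycle_of D'' = C" unfolding D''_def ucyc_img d1(2)
      by (simp add: cyc_img_comp[symmetric] G_invo2[OF g] cyc_img_id)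
    ultimately have "orientation E D'' C" unfolding orientation_def by simp
    then obtain r where r: "r \<in> G" "\<forall>(x,y)\<in>D''. r x = y" using cc unfolding consistent_cycle_def consistent_dcycle_def by blast
    have "\<forall>(x,y)\<in>D'. (g \<circ> r \<circ> inv g) x = y"
    proof (clarify)
      fix x y assume "(x,y) \<in> D'"
      hence "(inv g x, inv g y) \<in> D''" unfolding D''_def arc_img_mem by blast
      hence "r (inv g x) = inv g y" using r(2) by auto
      thus "(g \<circ> r \<circ> inv g) x = y" using G_invr[OF g] by simp
    qed
    moreover have "g \<circ> r \<circ> inv g \<in> G" using G_comp G_inv g r(1) by blast
    ultimately show ?thesis unfolding consistent_dcycle_def by blast
  qed
  ultimately show ?thesis unfolding consistent_cycle_def by blast
qed

lemma orbit_mem: "C' \<in> cyc_orbit G C \<longleftrightarrow> (\<exists>g\<in>G. C' = cyc_img g C)"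
  unfolding cyc_orbit_def by blast

lemma orbit_same: assumes "g \<in> G" shows "cyc_orbit G (cyc_img g C) = cyc_orbit G C"
proof (rule set_eqI)
  fix X show "X \<in> cyc_orbit G (cyc_img g C) \<longleftrightarrow> X \<in> cyc_orbit G C"
  proof
    assume "X \<in> cyc_orbit G (cyc_img g C)"
    then obtain h where "h \<in> G" "X = cyc_img h (cyc_img g C)" unfolding orbit_mem by blast
    hence "h \<circ> g \<in> G" "X = cyc_img (h \<circ> g) C" using G_comp assms by (auto simp: cyc_img_comp)
    thus "X \<in> cyc_orbit G C" unfolding orbit_mem by blast
  next
    assume "X \<in> cyc_orbit G C"
    then obtain h where h: "h \<in> G" "X = cyc_img h C" unfolding orbit_mem by blast
    have "h \<circ> inv g \<in> G" using G_comp G_inv assms h(1) by blast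
    moreover have "X = cyc_img (h \<circ> inv g) (cyc_img g C)"
      using h(2) by (simp add: cyc_img_comp[symmetric] comp_assoc G_invo2[OF assms] cyc_img_id)
    ultimately show "X \<in> cyc_orbit G (cyc_img g C)" unfolding orbit_mem by blast
  qed
qed

lemma part1_from_swaps:
  assumes SW: "\<And>v a d. E v a \<Longrightarrow> E v d \<Longrightarrow> a \<noteq> d \<Longrightarrow> \<exists>k\<in>G. k v = v \<and> k a = d \<and> k d = a"
  shows "\<forall>Orb\<in>cc_orbits E G. symmetric_orbit E G Orb"
proof
  fix Orb assume "Orb \<in> cc_orbits E G"
  then obtain C where C: "consistent_cycle E G C" "Orb = cyc_orbit G C" unfolding cc_orbits_def by blast
  show "symmetric_orbit E G Orb" unfolding symmetric_orbit_def
  proof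
    fix C' assume "C' \<in> Orb"
    then obtain g where "g \<in> G" "C' = cyc_img g C" using C(2) orbit_mem by blast
    hence "consistent_cycle E G C'" using consistent_img C(1) by simp
    thus "symmetric_cycle E G C'" using sym_from_swaps[OF SW] by blast
  qed
qed

end



context setting begin

lemma is_edge_pair: "E v a \<Longrightarrow> is_edge E {v,a}"
  unfolding is_edge_def by blast

lemma edge_at: assumes "is_edge E e" "v \<in> e" shows "\<exists>z. e = {v,z} \<and> E v z"
proof -
  obtain u w where uw: "E u w" "e = {u,w}" using assms(1) unfolding is_edge_def by blast
  show ?thesis
  proof (cases "v = u")
    case True thus ?thesis using uw by blast
  next
    case False
    hence "v = w" using assms(2) uw by auto
    thus ?thesis using uw E_sym by (metis insert_commute)
  qed
qed

lemma nbr4: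
  assumes tv: "tetravalent V E" and v: "v \<in> V"
    and n: "E v a" "E v b" "E v c" "E v d" and dist: "a \<noteq> b" "a \<noteq> c" "a \<noteq> d" "b \<noteq> c" "b \<noteq> d" "c \<noteq> d"
    and x: "E v x"
  shows "x = a \<or> x = b \<or> x = c \<or> x = d"
proof -
  let ?S = "{w\<in>V. E v w}"
  have c4: "card ?S = 4" using tv v unfolding tetravalent_def by blast
  have fin: "finite ?S" using finV by simp
  have sub: "{a,b,c,d} \<subseteq> ?S" using n E_V by blast
  have "card {a,b,c,d} = 4" using dist by simp
  hence "{a,b,c,d} = ?S" using card_subset_eq[OF fin sub] c4 by simp
  moreover have "x \<in> ?S" using x E_V by blast
  ultimately show ?thesis by blast
qed

end

locale part1 = setting +
  fixes F :: "'a set set set"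
  assumes tv: "tetravalent V E" and pm: "polytopal_map V E F" and c2: "class_2_01 V E F"
    and ma: "map_aut V E F = G"
begin

lemma face_dc: assumes "f \<in> F" shows "\<exists>D. dcycle E D \<and> f = ucycle_of D"
proof -
  have "\<forall>f\<in>F. ucycle E f" using pm unfolding polytopal_map_def by blast
  thus ?thesis using assms unfolding ucycle_def by blast
qed

lemma face_edge: assumes "f \<in> F" "{v,a} \<in> f" shows "E v a"
proof -
  obtain D where D: "dcycle E D" "f = ucycle_of D" using face_dc assms(1) by blast
  have "{v,a} \<in> ucycle_of D" using assms(2) D(2) by simp
  hence "(v,a) \<in> D \<or> (a,v) \<in> D" unfolding ucyc_mem .
  thus ?thesis using dc_E[OF D(1)] E_sym by blast
qed

lemma face_two: assumes "f \<in> F" "{v,p} \<in> f" "{v,q} \<in> f" "{v,s} \<in> f" shows "p = q \<or> p = s \<or> q = s"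
proof -
  obtain D where D: "dcycle E D" "f = ucycle_of D" using face_dc assms(1) by blast
  show ?thesis using dc_two[OF D(1), of v p q s] D(2) assms(2-4) by simp
qed

lemma face_other: assumes "f \<in> F" "{v,a} \<in> f" shows "\<exists>b. b \<noteq> a \<and> {v,b} \<in> f"
proof -
  obtain D where D: "dcycle E D" "f = ucycle_of D" using face_dc assms(1) by blast
  show ?thesis using dc_other_edge[OF D(1), of v a] D(2) assms(2) by simp
qed

lemma edge_card: assumes "E v a" shows "card {f\<in>F. {v,a} \<in> f} = 2"
proof -
  have "\<forall>e. is_edge E e \<longrightarrow> card {f\<in>F. e \<in> f} = 2" using pm unfolding polytopal_map_def by blast
  thus ?thesis using is_edge_pair[OF assms] by blast
qed

lemma C2: "\<forall>\<Phi>\<in>flags V E F. \<forall>\<Psi>\<in>flags V E F.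
          (flag_adj 0 \<Phi> \<Psi> \<longrightarrow> \<Psi> \<in> flag_orbit (map_aut V E F) \<Phi>)
        \<and> (flag_adj 1 \<Phi> \<Psi> \<longrightarrow> \<Psi> \<in> flag_orbit (map_aut V E F) \<Phi>)
        \<and> (flag_adj 2 \<Phi> \<Psi> \<longrightarrow> \<Psi> \<notin> flag_orbit (map_aut V E F) \<Phi>)"
  using c2 unfolding class_2_01_def by (rule conjunct2)

lemma adj1: "\<Phi> \<in> flags V E F \<Longrightarrow> \<Psi> \<in> flags V E F \<Longrightarrow> flag_adj 1 \<Phi> \<Psi> \<Longrightarrow> \<Psi> \<in> flag_orbit G \<Phi>"
  using C2 ma by simp

lemma flag_orbit_mem: "\<Psi> \<in> flag_orbit A \<Phi> \<longleftrightarrow> (\<exists>g\<in>A. flag_act g \<Phi> = \<Psi>)"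
  unfolding flag_orbit_def by auto

lemma flag_act_simp: "flag_act g (v,e,f) = (g v, g ` e, cyc_img g f)"
  unfolding flag_act_def by simp

lemma FS:
  assumes f: "f \<in> F" "{v,a} \<in> f" "{v,b} \<in> f" and ab: "a \<noteq> b"
  shows "\<exists>s\<in>G. s v = v \<and> s a = b \<and> s b = a"
proof -
  have Ea: "E v a" using face_edge f by blast
  have Eb: "E v b" using face_edge f by blast
  have vV: "v \<in> V" using E_V Ea by blast
  let ?P = "(v, {v,a}, f)" and ?Q = "(v, {v,b}, f)"
  have fl: "?P \<in> flags V E F" "?Q \<in> flags V E F" unfolding flags_def using vV is_edge_pair[OF Ea] is_edge_pair[OF Eb] f by simp_all
  have ne: "{v,a} \<noteq> {v,b}" using ab E_irr[OF Ea] by (auto simp: doubleton_eq_iff)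
  have "flag_adj 1 ?P ?Q" unfolding flag_adj_def using ne by simp
  hence "?Q \<in> flag_orbit G ?P" using adj1 fl by blast
  hence "\<exists>g\<in>G. flag_act g ?P = ?Q" unfolding flag_orbit_mem .
  then obtain g where g: "g \<in> G" "flag_act g ?P = ?Q" by (rule bexE)
  have "(g v, g ` {v,a}, cyc_img g f) = (v, {v,b}, f)" using trans[OF sym[OF flag_act_simp] g(2)] .
  hence "g v = v \<and> g ` {v,a} = {v,b} \<and> cyc_img g f = f" by (simp only: prod.inject)
  note g1 = conjunct1[OF this] conjunct1[OF conjunct2[OF this]] conjunct2[OF conjunct2[OF this]]
  have gvne: "g a \<noteq> v"
  proof
    assume "g a = v" hence "g a = g v" using g1(1) by simp
    hence "a = v" using G_inj[OF g(1)] by blast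
    thus False using E_irr[OF Ea] by simp
  qed
  have "{g v, g a} = {v,b}" using g1(2) by simp
  hence "{v, g a} = {v,b}" using g1(1) by simp
  hence ga: "g a = b" using gvne by (simp add: doubleton_eq_iff)
  have "g ` {v,b} \<in> cyc_img g f" unfolding cyc_img_def using f(3) by blast
  hence "{v, g b} \<in> f" using g1 by simp
  hence "a = b \<or> a = g b \<or> b = g b" using face_two[OF f(1,2,3)] by blast
  moreover have "b \<noteq> g b"
  proof
    assume "b = g b" hence "g b = b" by simp
    hence "g = id" using arc_fix[OF g(1) Eb] g1(1) by simp
    thus False using ga ab by simp
  qed
  ultimately have "g b = a" using ab by blast
  thus ?thesis using g(1) g1(1) ga by blast
qed

lemma two_faces: assumes "E v a" obtains f1 f2 where "f1 \<noteq> f2" "{f\<in>F. {v,a} \<in> f} = {f1,f2}"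
proof -
  have "\<exists>x y. {f\<in>F. {v,a} \<in> f} = {x,y} \<and> x \<noteq> y" using edge_card[OF assms] unfolding card_2_iff .
  thus ?thesis using that by blast
qed

lemma SW:
  assumes Ea: "E v a" and Ed: "E v d" and ad: "a \<noteq> d"
  shows "\<exists>k\<in>G. k v = v \<and> k a = d \<and> k d = a"
proof -
  have vV: "v \<in> V" using E_V Ea by blast
  obtain f1 f2 where f12: "f1 \<noteq> f2" "{f\<in>F. {v,a} \<in> f} = {f1,f2}" using two_faces[OF Ea] by blast
  have f1: "f1 \<in> F" "{v,a} \<in> f1" and f2: "f2 \<in> F" "{v,a} \<in> f2" using f12(2) by blast+
  obtain b1 where b1: "b1 \<noteq> a" "{v,b1} \<in> f1" using face_other[OF f1] by blast
  obtain b2 where b2: "b2 \<noteq> a" "{v,b2} \<in> f2" using face_other[OF f2] by blast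
  have Eb1: "E v b1" using face_edge f1(1) b1(2) by blast
  have Eb2: "E v b2" using face_edge f2(1) b2(2) by blast
  show ?thesis
  proof (cases "d = b1 \<or> d = b2")
    case True
    thus ?thesis
    proof
      assume "d = b1" thus ?thesis using FS[OF f1 b1(2)] b1(1) by simp
    next
      assume "d = b2" thus ?thesis using FS[OF f2 b2(2)] b2(1) by simp
    qed
  next
    case False
    hence db: "d \<noteq> b1" "d \<noteq> b2" by auto
    show ?thesis
    proof (cases "b1 = b2")
      case True
      define b where "b = b2"
      have fb: "{v,b} \<in> f1" "{v,b} \<in> f2" using b1 b2 True b_def by auto
      have "card {f\<in>F. {v,b} \<in> f} = 2" using edge_card Eb2 b_def by simp
      moreover have sub: "{f1,f2} \<subseteq> {f\<in>F. {v,b} \<in> f}" using fb f1 f2 by blast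
      moreover have "card {f1,f2} = 2" using f12(1) by simp
      ultimately have Sb: "{f\<in>F. {v,b} \<in> f} = {f1,f2}"
        by (metis card_subset_eq card.infinite zero_neq_numeral)
      define R where "R = {(x, y). is_edge E x \<and> v \<in> x \<and> is_edge E y \<and> v \<in> y \<and> (\<exists>f\<in>F. x \<in> f \<and> y \<in> f)}"
      have "({v,a},{v,d}) \<in> R\<^sup>*"
      proof -
        have P: "\<forall>v\<in>V. \<forall>e e'. is_edge E e \<and> v \<in> e \<and> is_edge E e' \<and> v \<in> e' \<longrightarrow>
          (e, e') \<in> {(x, y). is_edge E x \<and> v \<in> x \<and> is_edge E y \<and> v \<in> y
                       \<and> (\<exists>f\<in>F. x \<in> f \<and> y \<in> f)}\<^sup>*" using pm unfolding polytopal_map_def by blast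
        have "is_edge E {v,a} \<and> v \<in> {v,a} \<and> is_edge E {v,d} \<and> v \<in> {v,d}" using is_edge_pair[OF Ea] is_edge_pair[OF Ed] by simp
        thus ?thesis using P vV unfolding R_def by blast
      qed
      moreover have "\<And>y. ({v,a}, y) \<in> R\<^sup>* \<Longrightarrow> y = {v,a} \<or> y = {v,b}"
      proof -
        fix y assume "({v,a}, y) \<in> R\<^sup>*"
        thus "y = {v,a} \<or> y = {v,b}"
        proof (induction rule: rtrancl_induct)
          case base thus ?case by simp
        next
          case (step y z)
          then obtain f where f: "f \<in> F" "y \<in> f" "z \<in> f" and ze: "is_edge E z" "v \<in> z" unfolding R_def by blast
          obtain c where c: "z = {v,c}" using edge_at[OF ze] by blast
          have "f \<in> {f1,f2}" using step(3) f f12(2) Sb by blast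
          hence "{v,a} \<in> f" "{v,b} \<in> f" using f1 f2 fb by auto
          hence "a = b \<or> a = c \<or> b = c" using face_two[OF f(1)] f(3) c by blast
          thus ?case using c b1(1) True b_def by auto
        qed
      qed
      ultimately have "{v,d} = {v,a} \<or> {v,d} = {v,b}" by blast
      hence "d = a \<or> d = b" using E_irr[OF Ed] by (auto simp: doubleton_eq_iff)
      thus ?thesis using ad db b_def by blast
    next
      case False
      have b12: "b1 \<noteq> b2" using False .
      obtain s1 where s1: "s1 \<in> G" "s1 v = v" "s1 a = b1" "s1 b1 = a" using FS[OF f1 b1(2)] b1(1) by metis
      obtain s2 where s2: "s2 \<in> G" "s2 v = v" "s2 a = b2" "s2 b2 = a" using FS[OF f2 b2(2)] b2(1) by metis
      have dd: "a \<noteq> b1" "a \<noteq> b2" "a \<noteq> d" "b1 \<noteq> b2" "b1 \<noteq> d" "b2 \<noteq> d" using b1(1) b2(1) ad b12 db by auto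
      have N: "\<And>x. E v x \<Longrightarrow> x = a \<or> x = b1 \<or> x = b2 \<or> x = d"
        using nbr4[OF tv vV Ea Eb1 Eb2 Ed dd] by blast
      have "E v (s1 b2)" using G_E[OF s1(1) Eb2] s1(2) by simp
      moreover have "s1 b2 \<noteq> b2"
      proof
        assume "s1 b2 = b2" hence "s1 = id" using arc_fix[OF s1(1) Eb2] s1(2) by simp
        thus False using s1(3) b1(1) by simp
      qed
      moreover have "s1 b2 \<noteq> b1" using s1(3) G_inj[OF s1(1)] b2(1) by metis
      moreover have "s1 b2 \<noteq> a" using s1(4) G_inj[OF s1(1)] b12 by metis
      ultimately have k1: "s1 b2 = d" using N by blast
      have "E v (s2 d)" using G_E[OF s2(1) Ed] s2(2) by simp
      moreover have "s2 d \<noteq> d"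
      proof
        assume "s2 d = d" hence "s2 = id" using arc_fix[OF s2(1) Ed] s2(2) by simp
        thus False using s2(3) b2(1) by simp
      qed
      moreover have "s2 d \<noteq> a" using s2(4) G_inj[OF s2(1)] db by metis
      moreover have "s2 d \<noteq> b2" using s2(3) G_inj[OF s2(1)] ad by metis
      ultimately have k2: "s2 d = b1" using N by blast
      have "s1 \<circ> s2 \<in> G" using G_comp s1(1) s2(1) by blast
      moreover have "(s1 \<circ> s2) v = v" "(s1 \<circ> s2) a = d" "(s1 \<circ> s2) d = a" using s1 s2 k1 k2 by auto
      ultimately show ?thesis by blast
    qed
  qed
qed

theorem part1: "\<forall>Orb\<in>cc_orbits E G. symmetric_orbit E G Orb"
  by (rule part1_from_swaps) (rule SW)

end



lemma conv_conv_eq: "A\<inverse> = B \<Longrightarrow> A = B\<inverse>" by auto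

context setting begin

lemma sym_data:
  assumes sc: "symmetric_cycle E G f" and o: "orientation E D f"
  shows "\<exists>r\<in>G. \<forall>(x,y)\<in>D. r x = y" "\<exists>k\<in>G. arc_img k D = D\<inverse>"
proof -
  have cc: "consistent_cycle E G f" using sc unfolding symmetric_cycle_def by blast
  show r: "\<exists>r\<in>G. \<forall>(x,y)\<in>D. r x = y" using cc o unfolding consistent_cycle_def consistent_dcycle_def by blast
  obtain k D0 where k: "k \<in> G" "orientation E D0 f" "arc_img k D0 = D0\<inverse>" using sc unfolding symmetric_cycle_def by blast
  obtain r0 where r0: "r0 \<in> G" "\<forall>(x,y)\<in>D0. r0 x = y" using cc k(2) unfolding consistent_cycle_def consistent_dcycle_def by blast
  obtain r1 where r1: "r1 \<in> G" "\<forall>(x,y)\<in>D. r1 x = y" using r by blast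
  have dD: "dcycle E D" "ucycle_of D = f" using o unfolding orientation_def by auto
  have dD0: "dcycle E D0" "ucycle_of D0 = f" using k(2) unfolding orientation_def by auto
  have "D0 = D \<or> D0 = D\<inverse>" using OU[OF dD(1) dD0(1) r1(1) r0(1) r1(2) r0(2)] dD(2) dD0(2) by simp
  thus "\<exists>k\<in>G. arc_img k D = D\<inverse>"
  proof
    assume "D0 = D" thus ?thesis using k by blast
  next
    assume "D0 = D\<inverse>"
    hence "arc_img k (D\<inverse>) = D" using k(3) by simp
    hence "(arc_img k D)\<inverse> = D" by (simp add: arc_img_conv)
    hence "arc_img k D = D\<inverse>" by (rule conv_conv_eq)
    thus ?thesis using k(1) by blast
  qed
qed

lemma REFL:
  assumes dc: "dcycle E D" and r: "r \<in> G" "\<forall>(x,y)\<in>D. r x = y" and k: "k \<in> G" "arc_img k D = D\<inverse>"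
    and st: "s \<in> verts D" "t \<in> verts D"
  shows "\<exists>m\<in>G. m s = t \<and> arc_img m D = D\<inverse>"
proof -
  have "(s, r s) \<in> D" using st(1) dc_mem[OF r(2)] by simp
  hence "(k s, k (r s)) \<in> arc_img k D" unfolding arc_img_mem by blast
  hence "(k (r s), k s) \<in> D" using k(2) by simp
  hence "k (r s) \<in> verts D" "k s = r (k (r s))" using dc_mem[OF r(2)] by auto
  hence ks: "k s \<in> verts D" using dc_rclosed[OF dc r(2)] by simp
  hence "t \<in> orb r (k s)" using dc_char[OF dc r(2) ks] st(2) by simp
  then obtain j where j: "t = (r^^j) (k s)" unfolding orb_def by blast
  define m where "m = (r^^j) \<circ> k"
  have "m \<in> G" unfolding m_def using G_comp G_pow r(1) k(1) by blast
  moreover have "m s = t" unfolding m_def using j by simp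
  moreover have "arc_img m D = D\<inverse>" unfolding m_def arc_img_comp k(2) arc_img_conv
    using dc_powimg[OF dc r(2)] by simp
  ultimately show ?thesis by blast
qed

lemma orient_arc:
  assumes sc: "symmetric_cycle E G f" and e: "{u,w} \<in> f"
  shows "\<exists>D r. dcycle E D \<and> ucycle_of D = f \<and> r \<in> G \<and> (\<forall>(x,y)\<in>D. r x = y) \<and> (u,w) \<in> D"
proof -
  have cc: "consistent_cycle E G f" using sc unfolding symmetric_cycle_def by blast
  obtain D where D: "dcycle E D" "f = ucycle_of D" using cc unfolding consistent_cycle_def ucycle_def by blast
  have o: "orientation E D f" unfolding orientation_def using D by simp
  obtain r where r: "r \<in> G" "\<forall>(x,y)\<in>D. r x = y" using sym_data(1)[OF sc o] by blast
  have "{u,w} \<in> ucycle_of D" using e D(2) by simp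
  hence "(u,w) \<in> D \<or> (w,u) \<in> D" unfolding ucyc_mem .
  thus ?thesis
  proof
    assume "(u,w) \<in> D" thus ?thesis using D r by blast
  next
    assume "(w,u) \<in> D"
    hence "(u,w) \<in> D\<inverse>" by simp
    moreover have "dcycle E (D\<inverse>)" using dc_conv[OF D(1)] .
    moreover have "ucycle_of (D\<inverse>) = f" using D(2) by (simp add: ucyc_conv)
    moreover have "\<forall>(x,y)\<in>D\<inverse>. inv r x = y" using cons_conv[OF r] .
    ultimately show ?thesis using G_inv[OF r(1)] by blast
  qed
qed

lemma madj1:
  assumes sc: "symmetric_cycle E G f" and e: "{v,a} \<in> f" "{v,b} \<in> f" and ab: "a \<noteq> b"
  shows "\<exists>m\<in>G. m v = v \<and> m a = b \<and> cyc_img m f = f"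
proof -
  have "{a,v} \<in> f" using e(1) by (simp add: insert_commute)
  then obtain D r where D: "dcycle E D" "ucycle_of D = f" "r \<in> G" "\<forall>(x,y)\<in>D. r x = y" "(a,v) \<in> D"
    using orient_arc[OF sc] by blast
  have o: "orientation E D f" unfolding orientation_def using D by simp
  obtain k where k: "k \<in> G" "arc_img k D = D\<inverse>" using sym_data(2)[OF sc o] by blast
  have vv: "v \<in> verts D" using dc_rclosed[OF D(1) D(4) verts_mem[OF D(5)]] D(4) D(5) by auto
  obtain m where m: "m \<in> G" "m v = v" "arc_img m D = D\<inverse>" using REFL[OF D(1) D(3,4) k vv vv] by blast
  have "(m a, m v) \<in> arc_img m D" using D(5) unfolding arc_img_mem by blast
  hence "(v, m a) \<in> D" using m by simp
  hence ma: "m a = r v" using D(4) by auto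
  have "{v,b} \<in> ucycle_of D" using e(2) D(2) by simp
  hence "(v,b) \<in> D \<or> (b,v) \<in> D" unfolding ucyc_mem .
  moreover have "(b,v) \<notin> D" using dc_inj[OF D(1) _ D(5)] ab by blast
  ultimately have "(v,b) \<in> D" by blast
  hence "b = r v" using D(4) by auto
  moreover have "cyc_img m f = f" using m(3) D(2) ucyc_img[of m D] by (simp add: ucyc_conv)
  ultimately show ?thesis using m ma by auto
qed

lemma madj0:
  assumes sc: "symmetric_cycle E G f" and e: "{v,w} \<in> f"
  shows "\<exists>m\<in>G. m v = w \<and> m w = v \<and> cyc_img m f = f"
proof -
  obtain D r where D: "dcycle E D" "ucycle_of D = f" "r \<in> G" "\<forall>(x,y)\<in>D. r x = y" "(v,w) \<in> D"
    using orient_arc[OF sc e] by blast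
  have o: "orientation E D f" unfolding orientation_def using D by simp
  obtain k where k: "k \<in> G" "arc_img k D = D\<inverse>" using sym_data(2)[OF sc o] by blast
  have vv: "v \<in> verts D" using verts_mem[OF D(5)] .
  have ww: "w \<in> verts D" using dc_rclosed[OF D(1) D(4) vv] D(4) D(5) by auto
  obtain m where m: "m \<in> G" "m w = v" "arc_img m D = D\<inverse>" using REFL[OF D(1) D(3,4) k ww vv] by blast
  have "(m v, m w) \<in> arc_img m D" using D(5) unfolding arc_img_mem by blast
  hence "(v, m v) \<in> D" using m by simp
  hence "m v = r v" using D(4) by auto
  moreover have "r v = w" using D(4,5) by auto
  moreover have "cyc_img m f = f" using m(3) D(2) ucyc_img[of m D] by (simp add: ucyc_conv)
  ultimately show ?thesis using m by auto
qed


lemma uniq_orbit: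
  assumes sc: "symmetric_cycle E G f" "symmetric_cycle E G f'" and h: "h \<in> G" "f' = cyc_img h f"
    and e: "{u,w} \<in> f" "{u,w} \<in> f'"
  shows "f = f'"
proof -
  obtain D r where D: "dcycle E D" "ucycle_of D = f" "r \<in> G" "\<forall>(x,y)\<in>D. r x = y" "(u,w) \<in> D"
    using orient_arc[OF sc(1) e(1)] by blast
  obtain D' r' where D': "dcycle E D'" "ucycle_of D' = f'" "r' \<in> G" "\<forall>(x,y)\<in>D'. r' x = y" "(u,w) \<in> D'"
    using orient_arc[OF sc(2) e(2)] by blast
  have o: "orientation E D f" unfolding orientation_def using D by simp
  obtain k where k: "k \<in> G" "arc_img k D = D\<inverse>" using sym_data(2)[OF sc(1) o] by blast
  define D'' where "D'' = arc_img (inv h) D'"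
  have d'': "dcycle E D''" unfolding D''_def using dc_img[OF G_inv[OF h(1)] D'(1)] .
  have u'': "ucycle_of D'' = ucycle_of D" unfolding D''_def ucyc_img D'(2) D(2) h(2)
    by (simp add: cyc_img_comp[symmetric] G_invo2[OF h(1)] cyc_img_id)
  have c'': "\<forall>(x,y)\<in>D''. (inv h \<circ> r' \<circ> h) x = y"
  proof (clarify)
    fix x y assume "(x,y) \<in> D''"
    then obtain x' y' where "(x',y') \<in> D'" "x = inv h x'" "y = inv h y'" unfolding D''_def arc_img_mem by blast
    thus "(inv h \<circ> r' \<circ> h) x = y" using D'(4) G_invr[OF h(1)] by auto
  qed
  have g'': "inv h \<circ> r' \<circ> h \<in> G" using G_comp G_inv h(1) D'(3) by blast
  have D'h: "arc_img h D'' = D'" unfolding D''_def by (simp add: arc_img_comp[symmetric] G_invo[OF h(1)] arc_img_id)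
  have "D'' = D \<or> D'' = D\<inverse>" using OU[OF D(1) d'' D(3) g'' D(4) c'' u''] .
  hence "\<exists>h'\<in>G. D' = arc_img h' D"
  proof
    assume "D'' = D" thus ?thesis using D'h h(1) by blast
  next
    assume "D'' = D\<inverse>"
    hence "arc_img (h \<circ> k) D = D'" using D'h k(2) by (simp add: arc_img_comp)
    thus ?thesis using G_comp[OF h(1) k(1)] by metis
  qed
  then obtain h' where h': "h' \<in> G" "D' = arc_img h' D" by blast
  have "(u,w) \<in> arc_img h' D" using D'(5) h'(2) by simp
  then obtain s y where sy: "(s,y) \<in> D" "h' s = u" "h' y = w" unfolding arc_img_mem by blast
  have sv: "s \<in> verts D" "y = r s" using sy(1) dc_mem[OF D(4)] by auto
  have "s \<in> orb r u" using dc_char[OF D(1) D(4) verts_mem[OF D(5)]] sv(1) by simp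
  then obtain j where j: "s = (r^^j) u" unfolding orb_def by blast
  define m where "m = h' \<circ> (r^^j)"
  have mG: "m \<in> G" unfolding m_def using G_comp G_pow h'(1) D(3) by blast
  have rw: "r u = w" using D(4,5) by auto
  have "m u = u" unfolding m_def using j sy(2) by simp
  moreover have "m w = w" unfolding m_def using j sy(3) sv(2) rw[symmetric] by (simp add: funpow_swap1)
  moreover have Euw: "E u w" using dc_E[OF D(1) D(5)] .
  ultimately have "m = id" using arc_fix[OF mG] by blast
  moreover have "arc_img m D = D'" unfolding m_def arc_img_comp dc_powimg[OF D(1) D(4)] h'(2) ..
  ultimately have "D' = D" by (simp add: arc_img_id)
  thus ?thesis using D(2) D'(2) by simp
qed

lemma orbit_exists:
  assumes cc: "consistent_cycle E G C" and Euw: "E u w"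
  shows "\<exists>f\<in>cyc_orbit G C. {u,w} \<in> f"
proof -
  obtain D where D: "dcycle E D" "C = ucycle_of D" using cc unfolding consistent_cycle_def ucycle_def by blast
  obtain x y where xy: "(x,y) \<in> D" using dc_ne[OF D(1)] by blast
  obtain g where g: "g \<in> G" "g x = u" "g y = w" using arc_tr[OF dc_E[OF D(1) xy] Euw] by blast
  have "{x,y} \<in> ucycle_of D" unfolding ucyc_mem using xy by simp
  hence "{x,y} \<in> C" using D(2) by simp
  hence "g ` {x,y} \<in> cyc_img g C" unfolding cyc_img_def by blast
  hence "{u,w} \<in> cyc_img g C" using g by simp
  moreover have "cyc_img g C \<in> cyc_orbit G C" using g(1) unfolding orbit_mem by blast
  ultimately show ?thesis by blast
qed

lemma orbit_inv: assumes g: "g \<in> G" shows "cyc_img g ` cyc_orbit G C = cyc_orbit G C"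
proof
  show "cyc_img g ` cyc_orbit G C \<subseteq> cyc_orbit G C"
  proof
    fix X assume "X \<in> cyc_img g ` cyc_orbit G C"
    then obtain Y where Y: "Y \<in> cyc_orbit G C" "X = cyc_img g Y" by blast
    then obtain h where h: "h \<in> G" "X = cyc_img g (cyc_img h C)" unfolding orbit_mem by blast
    hence "X = cyc_img (g \<circ> h) C" by (simp add: cyc_img_comp)
    thus "X \<in> cyc_orbit G C" using G_comp[OF g h(1)] unfolding orbit_mem by blast
  qed
next
  show "cyc_orbit G C \<subseteq> cyc_img g ` cyc_orbit G C"
  proof
    fix X assume "X \<in> cyc_orbit G C"
    then obtain h where h: "h \<in> G" "X = cyc_img h C" unfolding orbit_mem by blast
    have "X = cyc_img g (cyc_img (inv g \<circ> h) C)"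
      using h(2) by (simp add: cyc_img_comp[symmetric] comp_assoc[symmetric] G_invo[OF g])
    moreover have "cyc_img (inv g \<circ> h) C \<in> cyc_orbit G C" using G_comp[OF G_inv[OF g] h(1)] unfolding orbit_mem by blast
    ultimately show "X \<in> cyc_img g ` cyc_orbit G C" by blast
  qed
qed

lemma flag_act_simp: "flag_act g (v,e,f) = (g v, g ` e, cyc_img g f)"
  unfolding flag_act_def by simp

lemma flag_act_comp: "flag_act (g \<circ> h) P = flag_act g (flag_act h P)"
  unfolding flag_act_def by (cases P) (auto simp: cyc_img_comp image_comp)

lemma flag_act_id: "flag_act id P = P"
  unfolding flag_act_def by (cases P) (auto simp: cyc_img_id)

lemma flag_orbit_mem: "Q \<in> flag_orbit A P \<longleftrightarrow> (\<exists>g\<in>A. flag_act g P = Q)"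
  unfolding flag_orbit_def by auto

lemma flag_orbit_same: assumes g: "g \<in> G" shows "flag_orbit G (flag_act g P) = flag_orbit G P"
proof (rule set_eqI)
  fix Q show "Q \<in> flag_orbit G (flag_act g P) \<longleftrightarrow> Q \<in> flag_orbit G P"
  proof
    assume "Q \<in> flag_orbit G (flag_act g P)"
    then obtain h where "h \<in> G" "flag_act h (flag_act g P) = Q" unfolding flag_orbit_mem by blast
    thus "Q \<in> flag_orbit G P" unfolding flag_orbit_mem using G_comp[OF _ g] flag_act_comp by metis
  next
    assume "Q \<in> flag_orbit G P"
    then obtain h where h: "h \<in> G" "flag_act h P = Q" unfolding flag_orbit_mem by blast
    have "flag_act (h \<circ> inv g) (flag_act g P) = Q"
      using h(2) by (simp add: flag_act_comp[symmetric] comp_assoc G_invo2[OF g])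
    thus "Q \<in> flag_orbit G (flag_act g P)" unfolding flag_orbit_mem using G_comp[OF h(1) G_inv[OF g]] by blast
  qed
qed


lemma uniq_orbit2:
  assumes all: "\<forall>f\<in>cyc_orbit G C. symmetric_cycle E G f" and f: "f \<in> cyc_orbit G C" "f' \<in> cyc_orbit G C"
    and e: "{u,w} \<in> f" "{u,w} \<in> f'"
  shows "f = f'"
proof -
  obtain g where g: "g \<in> G" "f = cyc_img g C" using f(1) unfolding orbit_mem by blast
  obtain g' where g': "g' \<in> G" "f' = cyc_img g' C" using f(2) unfolding orbit_mem by blast
  have "f' = cyc_img (g' \<circ> inv g) f" using g(2) g'(2)
    by (simp add: cyc_img_comp[symmetric] comp_assoc G_invo2[OF g(1)])
  moreover have "g' \<circ> inv g \<in> G" using G_comp[OF g'(1) G_inv[OF g(1)]] .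
  ultimately show ?thesis using uniq_orbit all f e by blast
qed

lemma sym_dc: "symmetric_cycle E G f \<Longrightarrow> \<exists>D. dcycle E D \<and> f = ucycle_of D"
  unfolding symmetric_cycle_def consistent_cycle_def ucycle_def by blast

lemma sym_edge: assumes "symmetric_cycle E G f" "{v,a} \<in> f" shows "E v a"
proof -
  obtain D where D: "dcycle E D" "f = ucycle_of D" using sym_dc assms(1) by blast
  have "{v,a} \<in> ucycle_of D" using assms(2) D(2) by simp
  hence "(v,a) \<in> D \<or> (a,v) \<in> D" unfolding ucyc_mem .
  thus ?thesis using dc_E[OF D(1)] E_sym by blast
qed

lemma sym_two: assumes "symmetric_cycle E G f" "{v,p} \<in> f" "{v,q} \<in> f" "{v,s} \<in> f" shows "p = q \<or> p = s \<or> q = s"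
proof -
  obtain D where D: "dcycle E D" "f = ucycle_of D" using sym_dc assms(1) by blast
  show ?thesis using dc_two[OF D(1), of v p q s] D(2) assms(2-4) by simp
qed

lemma sym_other: assumes "symmetric_cycle E G f" "{v,a} \<in> f" shows "\<exists>b. b \<noteq> a \<and> {v,b} \<in> f"
proof -
  obtain D where D: "dcycle E D" "f = ucycle_of D" using sym_dc assms(1) by blast
  show ?thesis using dc_other_edge[OF D(1), of v a] D(2) assms(2) by simp
qed

lemma flags_mem: "(v,e,f) \<in> flags V E F \<longleftrightarrow> v \<in> V \<and> is_edge E e \<and> f \<in> F \<and> v \<in> e \<and> e \<in> f"
  unfolding flags_def by simp

end

locale part2 = setting +
  fixes C1 C2
  assumes Gaut: "G = graph_aut V E" and tv: "tetravalent V E" and conn: "connected_graph V E"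
    and allsym: "\<forall>Orb\<in>cc_orbits E G. symmetric_orbit E G Orb"
    and cc1: "consistent_cycle E G C1" and cc2: "consistent_cycle E G C2"
    and one: "cyc_orbit G C1 \<noteq> cyc_orbit G C2"
begin

abbreviation "O1 \<equiv> cyc_orbit G C1"
abbreviation "O2 \<equiv> cyc_orbit G C2"
abbreviation "FF \<equiv> O1 \<union> O2"

lemma symO1: "\<forall>f\<in>O1. symmetric_cycle E G f"
proof -
  have "O1 \<in> cc_orbits E G" unfolding cc_orbits_def using cc1 by blast
  thus ?thesis using allsym unfolding symmetric_orbit_def by blast
qed

lemma symO2: "\<forall>f\<in>O2. symmetric_cycle E G f"
proof -
  have "O2 \<in> cc_orbits E G" unfolding cc_orbits_def using cc2 by blast
  thus ?thesis using allsym unfolding symmetric_orbit_def by blast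
qed

lemma symF: "f \<in> FF \<Longrightarrow> symmetric_cycle E G f"
  using symO1 symO2 by blast

lemma disj: assumes "f \<in> O1" "f \<in> O2" shows False
proof -
  obtain g where g: "g \<in> G" "f = cyc_img g C1" using assms(1) unfolding orbit_mem by blast
  obtain h where h: "h \<in> G" "f = cyc_img h C2" using assms(2) unfolding orbit_mem by blast
  have "O1 = cyc_orbit G f" using orbit_same[OF g(1)] g(2) by simp
  moreover have "O2 = cyc_orbit G f" using orbit_same[OF h(1)] h(2) by simp
  ultimately show False using one by simp
qed

lemma faces_at: assumes Euw: "E u w"
  shows "\<exists>f1 f2. f1 \<in> O1 \<and> f2 \<in> O2 \<and> {f\<in>FF. {u,w} \<in> f} = {f1,f2} \<and> f1 \<noteq> f2"
proof -
  obtain f1 where f1: "f1 \<in> O1" "{u,w} \<in> f1" using orbit_exists[OF cc1 Euw] by blast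
  obtain f2 where f2: "f2 \<in> O2" "{u,w} \<in> f2" using orbit_exists[OF cc2 Euw] by blast
  have "f1 \<noteq> f2" using disj f1 f2 by blast
  moreover have "{f\<in>FF. {u,w} \<in> f} = {f1,f2}"
  proof
    show "{f\<in>FF. {u,w} \<in> f} \<subseteq> {f1,f2}"
    proof
      fix f assume "f \<in> {f\<in>FF. {u,w} \<in> f}"
      hence f: "f \<in> FF" "{u,w} \<in> f" by auto
      show "f \<in> {f1,f2}"
      proof (cases "f \<in> O1")
        case True thus ?thesis using uniq_orbit2[OF symO1 True f1(1) f(2) f1(2)] by simp
      next
        case False hence "f \<in> O2" using f(1) by blast
        thus ?thesis using uniq_orbit2[OF symO2 _ f2(1) f(2) f2(2)] by simp
      qed
    qed
  next
    show "{f1,f2} \<subseteq> {f\<in>FF. {u,w} \<in> f}" using f1 f2 by blast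
  qed
  ultimately show ?thesis using f1 f2 by blast
qed

lemma edge_card2: "is_edge E e \<Longrightarrow> card {f\<in>FF. e \<in> f} = 2"
proof -
  assume "is_edge E e"
  then obtain u w where uw: "E u w" "e = {u,w}" unfolding is_edge_def by blast
  obtain f1 f2 where "{f\<in>FF. {u,w} \<in> f} = {f1,f2}" "f1 \<noteq> f2" using faces_at[OF uw(1)] by blast
  thus ?thesis using uw(2) by simp
qed

lemma two_turns:
  assumes Evx: "E v x"
  shows "\<exists>y1 y2. y1 \<noteq> y2 \<and> y1 \<noteq> x \<and> y2 \<noteq> x \<and> E v y1 \<and> E v y2
     \<and> (\<exists>f\<in>FF. {v,x} \<in> f \<and> {v,y1} \<in> f) \<and> (\<exists>f\<in>FF. {v,x} \<in> f \<and> {v,y2} \<in> f)"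
proof -
  obtain f1 where f1: "f1 \<in> O1" "{v,x} \<in> f1" using orbit_exists[OF cc1 Evx] by blast
  obtain f2 where f2: "f2 \<in> O2" "{v,x} \<in> f2" using orbit_exists[OF cc2 Evx] by blast
  have s1: "symmetric_cycle E G f1" using symO1 f1(1) by blast
  have s2: "symmetric_cycle E G f2" using symO2 f2(1) by blast
  obtain y1 where y1: "y1 \<noteq> x" "{v,y1} \<in> f1" using sym_other[OF s1 f1(2)] by blast
  obtain y2 where y2: "y2 \<noteq> x" "{v,y2} \<in> f2" using sym_other[OF s2 f2(2)] by blast
  have E1: "E v y1" using sym_edge[OF s1 y1(2)] .
  have E2: "E v y2" using sym_edge[OF s2 y2(2)] .
  have "y1 \<noteq> y2"
  proof
    assume yy: "y1 = y2"
    have turn: "\<exists>r D. r \<in> G \<and> dcycle E D \<and> ucycle_of D = f \<and> (\<forall>(a,b)\<in>D. r a = b) \<and> (x,v) \<in> D \<and> r v = y"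
      if sf: "symmetric_cycle E G f" and fx: "{v,x} \<in> f" and fy: "{v,y} \<in> f" and yx: "y \<noteq> x" for f y
    proof -
      have "{x,v} \<in> f" using fx by (simp add: insert_commute)
      then obtain D r where D: "dcycle E D" "ucycle_of D = f" "r \<in> G" "\<forall>(a,b)\<in>D. r a = b" "(x,v) \<in> D"
        using orient_arc[OF sf] by blast
      have vv: "v \<in> verts D" using dc_rclosed[OF D(1) D(4) verts_mem[OF D(5)]] D(4) D(5) by auto
      hence a: "(v, r v) \<in> D" using dc_mem[OF D(4)] by simp
      hence "{v, r v} \<in> ucycle_of D" unfolding ucyc_mem by simp
      hence "{v, r v} \<in> f" using D(2) by simp
      moreover have "r v \<noteq> x" using dc_no2[OF D(1) D(5)] a by auto
      ultimately have "r v = y" using sym_two[OF sf fx fy] yx by blast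
      thus ?thesis using D by blast
    qed
    obtain r1 D1 where R1: "r1 \<in> G" "dcycle E D1" "ucycle_of D1 = f1" "\<forall>(a,b)\<in>D1. r1 a = b" "(x,v) \<in> D1" "r1 v = y1"
      using turn[OF s1 f1(2) y1(2) y1(1)] by blast
    obtain r2 D2 where R2: "r2 \<in> G" "dcycle E D2" "ucycle_of D2 = f2" "\<forall>(a,b)\<in>D2. r2 a = b" "(x,v) \<in> D2" "r2 v = y2"
      using turn[OF s2 f2(2) y2(2) y2(1)] by blast
    have Exv: "E x v" using E_sym[OF Evx] .
    have "r1 x = r2 x" using R1(4,5) R2(4,5) by auto
    moreover have "r1 v = r2 v" using R1(6) R2(6) yy by simp
    ultimately have "r1 = r2" using arc_uniq[OF R1(1) R2(1) Exv] by blast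
    hence "D1 = D2" using CU[OF R1(2) R2(2) R1(4)] R2(4) verts_mem[OF R1(5)] verts_mem[OF R2(5)] by blast
    hence "f1 = f2" using R1(3) R2(3) by simp
    thus False using disj f1(1) f2(1) by blast
  qed
  thus ?thesis using y1 y2 E1 E2 f1 f2 by blast
qed

lemma vconn:
  assumes vV: "v \<in> V" and Ex: "E v x" and Ez: "E v z"
  shows "({v,x},{v,z}) \<in> {(p, q). is_edge E p \<and> v \<in> p \<and> is_edge E q \<and> v \<in> q
                       \<and> (\<exists>f\<in>FF. p \<in> f \<and> q \<in> f)}\<^sup>*" (is "_ \<in> ?R\<^sup>*")
proof -
  have step: "({v,p},{v,q}) \<in> ?R" if "E v p" "E v q" "\<exists>f\<in>FF. {v,p} \<in> f \<and> {v,q} \<in> f" for p q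
    using that is_edge_pair by simp
  obtain b c where bc: "b \<noteq> c" "b \<noteq> x" "c \<noteq> x" "E v b" "E v c"
    "\<exists>f\<in>FF. {v,x} \<in> f \<and> {v,b} \<in> f" "\<exists>f\<in>FF. {v,x} \<in> f \<and> {v,c} \<in> f"
    using two_turns[OF Ex] by blast
  have rb: "({v,x},{v,b}) \<in> ?R\<^sup>*" using step[OF Ex bc(4) bc(6)] by blast
  have rc: "({v,x},{v,c}) \<in> ?R\<^sup>*" using step[OF Ex bc(5) bc(7)] by blast
  show ?thesis
  proof (cases "z = x \<or> z = b \<or> z = c")
    case True thus ?thesis using rb rc by auto
  next
    case False
    obtain y where y: "y \<noteq> z" "E v y" "\<exists>f\<in>FF. {v,z} \<in> f \<and> {v,y} \<in> f"
      using two_turns[OF Ez] by blast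
    have "y = x \<or> y = b \<or> y = c \<or> y = z"
      using nbr4[OF tv vV Ex bc(4) bc(5) Ez _ _ _ bc(1) _ _ y(2)] bc False by blast
    hence yr: "({v,x},{v,y}) \<in> ?R\<^sup>*" using rb rc y(1) by auto
    have "\<exists>f\<in>FF. {v,y} \<in> f \<and> {v,z} \<in> f" using y(3) by blast
    hence "({v,y},{v,z}) \<in> ?R" using step[OF y(2) Ez] by blast
    with yr show ?thesis by (rule rtrancl_into_rtrancl)
  qed
qed


lemma poly: "polytopal_map V E FF"
  unfolding polytopal_map_def
proof (intro conjI)
  show "simple_graph V E" using sg .
  show "connected_graph V E" using conn .
  show "\<forall>f\<in>FF. ucycle E f"
  proof
    fix f assume "f \<in> FF"
    hence "symmetric_cycle E G f" using symF by blast
    thus "ucycle E f" unfolding symmetric_cycle_def consistent_cycle_def by blast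
  qed
  show "\<forall>e. is_edge E e \<longrightarrow> card {f\<in>FF. e \<in> f} = 2" using edge_card2 by blast
  show "\<forall>v\<in>V. \<forall>e e'. is_edge E e \<and> v \<in> e \<and> is_edge E e' \<and> v \<in> e' \<longrightarrow>
          (e, e') \<in> {(x, y). is_edge E x \<and> v \<in> x \<and> is_edge E y \<and> v \<in> y
                       \<and> (\<exists>f\<in>FF. x \<in> f \<and> y \<in> f)}\<^sup>*"
  proof (intro ballI allI impI)
    fix v e e' assume vV: "v \<in> V" and h: "is_edge E e \<and> v \<in> e \<and> is_edge E e' \<and> v \<in> e'"
    obtain x where x: "e = {v,x}" "E v x" using edge_at h by blast
    obtain z where z: "e' = {v,z}" "E v z" using edge_at h by blast
    show "(e, e') \<in> {(x, y). is_edge E x \<and> v \<in> x \<and> is_edge E y \<and> v \<in> y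
                       \<and> (\<exists>f\<in>FF. x \<in> f \<and> y \<in> f)}\<^sup>*"
      using vconn[OF vV x(2) z(2)] x(1) z(1) by simp
  qed
qed

lemma FF_inv: "g \<in> G \<Longrightarrow> cyc_img g ` FF = FF"
  using orbit_inv by (simp add: image_Un)

lemma maut: "map_aut V E FF = G"
  unfolding map_aut_def using FF_inv Gaut by auto

lemma cyc_img_inj: assumes g: "g \<in> G" "cyc_img g f = cyc_img g f'" shows "f = f'"
proof -
  have "cyc_img (inv g) (cyc_img g f) = cyc_img (inv g) (cyc_img g f')" using g(2) by simp
  thus ?thesis by (simp add: cyc_img_comp[symmetric] G_invo2[OF g(1)] cyc_img_id)
qed

lemma adj_all:
  assumes P: "(v,e,f) \<in> flags V E FF" and Q: "(v',e',f') \<in> flags V E FF"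
  shows "(flag_adj 0 (v,e,f) (v',e',f') \<longrightarrow> (v',e',f') \<in> flag_orbit G (v,e,f))
       \<and> (flag_adj 1 (v,e,f) (v',e',f') \<longrightarrow> (v',e',f') \<in> flag_orbit G (v,e,f))
       \<and> (flag_adj 2 (v,e,f) (v',e',f') \<longrightarrow> (v',e',f') \<notin> flag_orbit G (v,e,f))"
proof (intro conjI impI)
  have p: "v \<in> V" "is_edge E e" "f \<in> FF" "v \<in> e" "e \<in> f" using P unfolding flags_mem by auto
  have q: "v' \<in> V" "is_edge E e'" "f' \<in> FF" "v' \<in> e'" "e' \<in> f'" using Q unfolding flags_mem by auto
  obtain a where a: "e = {v,a}" "E v a" using edge_at p(2,4) by blast
  have sf: "symmetric_cycle E G f" using symF p(3) by blast
  {
    assume "flag_adj 0 (v,e,f) (v',e',f')"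
    hence h: "v \<noteq> v'" "e = e'" "f = f'" unfolding flag_adj_def by auto
    have "v' = a" using h q(4) a(1) by auto
    obtain m where m: "m \<in> G" "m v = v'" "m v' = v" "cyc_img m f = f" using madj0[OF sf] p(5) a(1) \<open>v' = a\<close> by blast
    have "flag_act m (v,e,f) = (v', e', f')" unfolding flag_act_simp using m h a(1) \<open>v' = a\<close> by (auto simp: insert_commute)
    thus "(v',e',f') \<in> flag_orbit G (v,e,f)" unfolding flag_orbit_mem using m(1) by blast
  next
    assume "flag_adj 1 (v,e,f) (v',e',f')"
    hence h: "v = v'" "e \<noteq> e'" "f = f'" unfolding flag_adj_def by auto
    obtain b where b: "e' = {v,b}" "E v b" using edge_at q(2,4) h(1) by blast
    have ab: "a \<noteq> b" using h(2) a(1) b(1) by auto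
    obtain m where m: "m \<in> G" "m v = v" "m a = b" "cyc_img m f = f"
      using madj1[OF sf _ _ ab] p(5) q(5) a(1) b(1) h(3) by blast
    have "flag_act m (v,e,f) = (v', e', f')" unfolding flag_act_simp using m h a(1) b(1) by auto
    thus "(v',e',f') \<in> flag_orbit G (v,e,f)" unfolding flag_orbit_mem using m(1) by blast
  next
    assume "flag_adj 2 (v,e,f) (v',e',f')"
    hence h: "v = v'" "e = e'" "f \<noteq> f'" unfolding flag_adj_def by auto
    show "(v',e',f') \<notin> flag_orbit G (v,e,f)"
    proof
      assume "(v',e',f') \<in> flag_orbit G (v,e,f)"
      then obtain g where g: "g \<in> G" "flag_act g (v,e,f) = (v',e',f')" unfolding flag_orbit_mem by blast
      have "(g v, g ` e, cyc_img g f) = (v',e',f')" using g(2) unfolding flag_act_simp .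
      hence g1: "g v = v" "g ` e = e" "cyc_img g f = f'" using h by simp_all
      have "{g v, g a} = {v,a}" using g1(2) a(1) by simp
      hence "{v, g a} = {v,a}" using g1(1) by simp
      moreover have "g a \<noteq> v"
      proof
        assume "g a = v" hence "g a = g v" using g1(1) by simp
        hence "a = v" using G_inj[OF g(1)] by blast
        thus False using E_irr[OF a(2)] by simp
      qed
      ultimately have "g a = a" by (auto simp: doubleton_eq_iff)
      hence "g = id" using arc_fix[OF g(1) a(2)] g1(1) by simp
      thus False using g1(3) h(3) by (simp add: cyc_img_id)
    qed
  }
qed

lemma orbits2: "card {flag_orbit (map_aut V E FF) P | P. P \<in> flags V E FF} = 2"
proof -
  obtain v where vV: "v \<in> V" using conn unfolding connected_graph_def by blast
  have "card {w\<in>V. E v w} = 4" using tv vV unfolding tetravalent_def by blast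
  hence "{w\<in>V. E v w} \<noteq> {}" by (metis card.empty zero_neq_numeral)
  then obtain w where Evw: "E v w" by blast
  obtain f1 f2 where f: "f1 \<in> O1" "f2 \<in> O2" "{f\<in>FF. {v,w} \<in> f} = {f1,f2}" "f1 \<noteq> f2"
    using faces_at[OF Evw] by blast
  have f1: "f1 \<in> FF" "{v,w} \<in> f1" and f2: "f2 \<in> FF" "{v,w} \<in> f2" using f(3) by blast+
  define P1 where "P1 = (v, {v,w}, f1)"
  define P2 where "P2 = (v, {v,w}, f2)"
  have fl: "P1 \<in> flags V E FF" "P2 \<in> flags V E FF" unfolding P1_def P2_def flags_mem
    using vV is_edge_pair[OF Evw] f1 f2 by auto
  have "flag_adj 2 P1 P2" unfolding P1_def P2_def flag_adj_def using f(4) by simp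
  hence nin: "P2 \<notin> flag_orbit G P1" using adj_all[of v "{v,w}" f1 v "{v,w}" f2] fl unfolding P1_def P2_def by blast
  have "P2 \<in> flag_orbit G P2" unfolding flag_orbit_mem using G_id flag_act_id by metis
  hence ne: "flag_orbit G P1 \<noteq> flag_orbit G P2" using nin by blast
  have "{flag_orbit G P | P. P \<in> flags V E FF} = {flag_orbit G P1, flag_orbit G P2}"
  proof
    show "{flag_orbit G P1, flag_orbit G P2} \<subseteq> {flag_orbit G P | P. P \<in> flags V E FF}" using fl by blast
  next
    show "{flag_orbit G P | P. P \<in> flags V E FF} \<subseteq> {flag_orbit G P1, flag_orbit G P2}"
    proof
      fix X assume "X \<in> {flag_orbit G P | P. P \<in> flags V E FF}"
      then obtain P where XP: "X = flag_orbit G P" "P \<in> flags V E FF" by blast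
      obtain x e f where Pd: "P = (x,e,f)" by (cases P) auto
      have X: "X = flag_orbit G (x,e,f)" "(x,e,f) \<in> flags V E FF" using XP Pd by simp_all
      hence q: "x \<in> V" "is_edge E e" "f \<in> FF" "x \<in> e" "e \<in> f" unfolding flags_mem by auto
      obtain y where y: "e = {x,y}" "E x y" using edge_at q(2,4) by blast
      obtain g where g: "g \<in> G" "g v = x" "g w = y" using arc_tr[OF Evw y(2)] by blast
      have i1: "cyc_img g f1 \<in> FF" "cyc_img g f2 \<in> FF" using FF_inv[OF g(1)] f1(1) f2(1) by blast+
      have "g ` {v,w} \<in> cyc_img g f1" "g ` {v,w} \<in> cyc_img g f2" unfolding cyc_img_def using f1(2) f2(2) by blast+
      hence i2: "{x,y} \<in> cyc_img g f1" "{x,y} \<in> cyc_img g f2" using g by simp_all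
      have i3: "cyc_img g f1 \<noteq> cyc_img g f2" using cyc_img_inj[OF g(1)] f(4) by blast
      obtain h1 h2 where hh: "{f\<in>FF. {x,y} \<in> f} = {h1,h2}" "h1 \<noteq> h2" using faces_at[OF y(2)] by blast
      have "cyc_img g f1 \<in> {h1,h2}" "cyc_img g f2 \<in> {h1,h2}" using i1 i2 hh(1) by blast+
      hence "{h1,h2} = {cyc_img g f1, cyc_img g f2}" using i3 by blast
      moreover have "f \<in> {h1,h2}" using hh(1) q(3,5) y(1) by blast
      ultimately have "f = cyc_img g f1 \<or> f = cyc_img g f2" by blast
      hence "(x,e,f) = flag_act g P1 \<or> (x,e,f) = flag_act g P2"
        unfolding P1_def P2_def flag_act_simp using g y(1) by auto
      hence "X = flag_orbit G P1 \<or> X = flag_orbit G P2" using X(1) flag_orbit_same[OF g(1)] by metis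
      thus "X \<in> {flag_orbit G P1, flag_orbit G P2}" by blast
    qed
  qed
  thus ?thesis using ne maut by simp
qed

lemma c201: "class_2_01 V E FF"
  unfolding class_2_01_def
proof (intro conjI)
  show "card {flag_orbit (map_aut V E FF) P | P. P \<in> flags V E FF} = 2" by (rule orbits2)
  show "\<forall>\<Phi>\<in>flags V E FF. \<forall>\<Psi>\<in>flags V E FF.
          (flag_adj 0 \<Phi> \<Psi> \<longrightarrow> \<Psi> \<in> flag_orbit (map_aut V E FF) \<Phi>)
        \<and> (flag_adj 1 \<Phi> \<Psi> \<longrightarrow> \<Psi> \<in> flag_orbit (map_aut V E FF) \<Phi>)
        \<and> (flag_adj 2 \<Phi> \<Psi> \<longrightarrow> \<Psi> \<notin> flag_orbit (map_aut V E FF) \<Phi>)"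
    unfolding maut
  proof (intro ballI)
    fix P Q assume PQ: "P \<in> flags V E FF" "Q \<in> flags V E FF"
    obtain v e f where P: "P = (v,e,f)" by (cases P) auto
    obtain v' e' f' where Q: "Q = (v',e',f')" by (cases Q) auto
    show "(flag_adj 0 P Q \<longrightarrow> Q \<in> flag_orbit G P) \<and> (flag_adj 1 P Q \<longrightarrow> Q \<in> flag_orbit G P)
        \<and> (flag_adj 2 P Q \<longrightarrow> Q \<notin> flag_orbit G P)"
      using adj_all[of v e f v' e' f'] PQ unfolding P Q by blast
  qed
qed

theorem part2: "\<exists>F. polytopal_map V E F \<and> class_2_01 V E F \<and> map_aut V E F = G \<and> F = O1 \<union> O2"
  using poly c201 maut by blast

end

theorem theorem2p7:
  fixes V :: "'a set" and E :: "'a \<Rightarrow> 'a \<Rightarrow> bool" and G :: "('a \<Rightarrow> 'a) set"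
  assumes "simple_graph V E" and "connected_graph V E" and "tetravalent V E"
    and "perm_subgroup V E G" and "arc_regular E G"
  shows "(\<forall>F. polytopal_map V E F \<and> class_2_01 V E F \<and> map_aut V E F = G
            \<longrightarrow> (\<forall>Orb\<in>cc_orbits E G. symmetric_orbit E G Orb))
       \<and> (G = graph_aut V E \<and> (\<forall>Orb\<in>cc_orbits E G. symmetric_orbit E G Orb)
            \<longrightarrow> (\<forall>O1\<in>cc_orbits E G. \<forall>O2\<in>cc_orbits E G. O1 \<noteq> O2 \<longrightarrow>
                  (\<exists>F. polytopal_map V E F \<and> class_2_01 V E F \<and> map_aut V E F = G
                       \<and> F = O1 \<union> O2)))"
proof -
  interpret S: setting V E G using assms(1,4,5) by unfold_locales
  show ?thesis
  proof (intro conjI allI impI)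
    fix F assume h: "polytopal_map V E F \<and> class_2_01 V E F \<and> map_aut V E F = G"
    interpret P: part1 V E G F using assms(3) h by unfold_locales auto
    show "\<forall>Orb\<in>cc_orbits E G. symmetric_orbit E G Orb" by (rule P.part1)
  next
    assume h: "G = graph_aut V E \<and> (\<forall>Orb\<in>cc_orbits E G. symmetric_orbit E G Orb)"
    show "\<forall>Q1\<in>cc_orbits E G. \<forall>Q2\<in>cc_orbits E G. Q1 \<noteq> Q2 \<longrightarrow>
                  (\<exists>F. polytopal_map V E F \<and> class_2_01 V E F \<and> map_aut V E F = G
                       \<and> F = Q1 \<union> Q2)"
    proof (intro ballI impI)
      fix Q1 Q2 assume q: "Q1 \<in> cc_orbits E G" "Q2 \<in> cc_orbits E G" "Q1 \<noteq> Q2"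
      obtain C1 where c1: "consistent_cycle E G C1" "Q1 = cyc_orbit G C1" using q(1) unfolding cc_orbits_def by blast
      obtain C2 where c2: "consistent_cycle E G C2" "Q2 = cyc_orbit G C2" using q(2) unfolding cc_orbits_def by blast
      interpret P2: part2 V E G C1 C2 using assms(2,3) h c1 c2 q(3) by unfold_locales auto
      show "\<exists>F. polytopal_map V E F \<and> class_2_01 V E F \<and> map_aut V E F = G \<and> F = Q1 \<union> Q2"
        using P2.part2 c1(2) c2(2) by simp
    qed
  qed
qed

end
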